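(* Let $\alpha\approx1.46557$ be the real root of $x^3-x^2-1$ between $1$ and $2$. Every graph of pathwidth at most $1$ and order $n$ has at most $\alpha^n$ 1-minimal perfect dominating sets. Moreover, the number of 1-minimal perfect dominating sets of the path on $n$ vertices is $\Theta(\alpha^n)$.
   Context: A perfect dominating set of $G=(V,E)$ is a set $D\subseteq V$ such that every vertex of $V\setminus D$ has exactly one neighbour in $D$ (no condition on vertices of $D$); i.e. an $(\mathbb{N},\{1\})$-dominating set. It is 1-minimal if for every $x\in D$, $D\setminus\{x\}$ is not a perfect dominating set. Order = number of vertices; pathwidth is the standard notion. *)

theory Defs
  imports Complex_Main "HOL-Library.Landau_Symbols"
begin

definition simple_graph :: "'a set \<Rightarrow> 'a set set \<Rightarrow> bool" where
  "simple_graph V E \<longleftrightarrow> finite V \<and> (\<forall>e\<in>E. e \<subseteq> V \<and> card e = 2)"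

definition adj :: "'a set set \<Rightarrow> 'a \<Rightarrow> 'a \<Rightarrow> bool" where
  "adj E u v \<longleftrightarrow> {u, v} \<in> E"

definition path_decomposition :: "'a set \<Rightarrow> 'a set set \<Rightarrow> 'a set list \<Rightarrow> nat \<Rightarrow> bool" where
  "path_decomposition V E bags k \<longleftrightarrow>
     (\<forall>B\<in>set bags. B \<subseteq> V \<and> card B \<le> k + 1) \<and>
     V \<subseteq> \<Union>(set bags) \<and>
     (\<forall>e\<in>E. \<exists>B\<in>set bags. e \<subseteq> B) \<and>
     (\<forall>v i j l. i \<le> j \<and> j \<le> l \<and> l < length bags \<and> v \<in> bags ! i \<and> v \<in> bags ! l
                 \<longrightarrow> v \<in> bags ! j)"

definition pathwidth_at_most :: "'a set \<Rightarrow> 'a set set \<Rightarrow> nat \<Rightarrow> bool" where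
  "pathwidth_at_most V E k \<longleftrightarrow> (\<exists>bags. path_decomposition V E bags k)"

definition perfect_dominating :: "'a set \<Rightarrow> 'a set set \<Rightarrow> 'a set \<Rightarrow> bool" where
  "perfect_dominating V E D \<longleftrightarrow> D \<subseteq> V \<and>
     (\<forall>v \<in> V - D. card {u \<in> D. adj E u v} = 1)"

definition one_minimal_pds :: "'a set \<Rightarrow> 'a set set \<Rightarrow> 'a set \<Rightarrow> bool" where
  "one_minimal_pds V E D \<longleftrightarrow> perfect_dominating V E D \<and>
     (\<forall>x\<in>D. \<not> perfect_dominating V E (D - {x}))"

definition path_V :: "nat \<Rightarrow> nat set" where
  "path_V n = {0..<n}"

definition path_E :: "nat \<Rightarrow> nat set set" where
  "path_E n = {{i, Suc i} | i. Suc i < n}"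

end

theory Submission
  imports Defs
begin
definition good :: "'a set \<Rightarrow> ('a \<Rightarrow> 'a \<Rightarrow> bool) \<Rightarrow> 'a set \<Rightarrow> bool" where
  "good V A D \<longleftrightarrow> D \<subseteq> V \<and> (\<forall>v\<in>V-D. \<exists>!u. u\<in>D \<and> A u v) \<and>
     (\<forall>x\<in>D. \<not>(\<exists>y\<in>D. \<forall>z. A z x \<longleftrightarrow> z = y))"

lemma card_one_ex1: "card {u. P u} = 1 \<longleftrightarrow> (\<exists>!u. P u)"
  by (auto simp: card_1_singleton_iff) (metis mem_Collect_eq singleton_iff)+

lemma adj_sym: "adj E u v = adj E v u"
  by (simp add: adj_def insert_commute)

lemma sg_adj: assumes "simple_graph V E" "adj E u v"
  shows "u \<in> V" "v \<in> V" "u \<noteq> v"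
  using assms by (auto simp: simple_graph_def adj_def)

lemma pds_iff: "perfect_dominating V E D \<longleftrightarrow> D \<subseteq> V \<and> (\<forall>v\<in>V-D. \<exists>!u. u\<in>D \<and> adj E u v)"
  unfolding perfect_dominating_def
  using card_one_ex1[of "\<lambda>u. u \<in> D \<and> adj E u _"] by simp

lemma one_min_iff:
  assumes sg: "simple_graph V E"
  shows "one_minimal_pds V E D \<longleftrightarrow> good V (adj E) D"
proof -
  have key: "perfect_dominating V E (D - {x}) \<longleftrightarrow> (\<exists>y\<in>D. \<forall>z. adj E z x \<longleftrightarrow> z = y)"
    if P: "perfect_dominating V E D" and x: "x \<in> D" for x
  proof
    assume Q: "perfect_dominating V E (D - {x})"
    have DV: "D \<subseteq> V" "\<forall>v\<in>V-D. \<exists>!u. u\<in>D \<and> adj E u v" using P by (auto simp: pds_iff)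
    have Q2: "\<forall>v\<in>V-(D-{x}). \<exists>!u. u\<in>D-{x} \<and> adj E u v" using Q by (auto simp: pds_iff)
    have "x \<in> V - (D - {x})" using x DV by auto
    then obtain y where y: "y \<in> D - {x}" "adj E y x" using Q2 by blast
    have "\<forall>z. adj E z x \<longleftrightarrow> z = y"
    proof (intro allI iffI)
      fix z assume z: "adj E z x"
      have zV: "z \<in> V" "z \<noteq> x" using sg_adj[OF sg z] by auto
      show "z = y"
      proof (cases "z \<in> D")
        case True
        then show ?thesis using Q2 \<open>x \<in> V - (D - {x})\<close> y z zV by blast
      next
        case False
        then have "z \<in> V - D" "z \<in> V - (D - {x})" using zV by auto
        then obtain w where w: "w \<in> D - {x}" "adj E w z" using Q2 by blast
        have "adj E x z" using z adj_sym by metis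
        then show ?thesis using DV(2) \<open>z \<in> V - D\<close> w x by blast
      qed
    qed (use y in simp)
    then show "\<exists>y\<in>D. \<forall>z. adj E z x \<longleftrightarrow> z = y" using y by blast
  next
    assume "\<exists>y\<in>D. \<forall>z. adj E z x \<longleftrightarrow> z = y"
    then obtain y where y: "y \<in> D" "\<forall>z. adj E z x \<longleftrightarrow> z = y" by blast
    have DV: "D \<subseteq> V" "\<forall>v\<in>V-D. \<exists>!u. u\<in>D \<and> adj E u v" using P by (auto simp: pds_iff)
    have yx: "y \<noteq> x" using y sg_adj[OF sg, of y x] by auto
    show "perfect_dominating V E (D - {x})"
      unfolding pds_iff
    proof (intro conjI ballI)
      show "D - {x} \<subseteq> V" using DV by auto
      fix v assume v: "v \<in> V - (D - {x})"
      show "\<exists>!u. u \<in> D - {x} \<and> adj E u v"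
      proof (cases "v = x")
        case True then show ?thesis using y yx by auto
      next
        case False
        then have vD: "v \<in> V - D" using v by auto
        have "\<not> adj E x v" using y vD adj_sym by (metis Diff_iff)
        then show ?thesis using DV(2) vD by (metis Diff_iff singletonD)
      qed
    qed
  qed
  have g: "good V (adj E) D \<longleftrightarrow> perfect_dominating V E D \<and> (\<forall>x\<in>D. \<not>(\<exists>y\<in>D. \<forall>z. adj E z x \<longleftrightarrow> z = y))"
    by (simp add: good_def pds_iff)
  show ?thesis
  proof (cases "perfect_dominating V E D")
    case True
    then show ?thesis unfolding g one_minimal_pds_def using key[OF True] by blast
  qed (simp add: g one_minimal_pds_def)
qed

definition wfg :: "'a set \<Rightarrow> ('a \<Rightarrow> 'a \<Rightarrow> bool) \<Rightarrow> bool" where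
  "wfg V A \<longleftrightarrow> finite V \<and> (\<forall>u v. A u v \<longrightarrow> u \<in> V \<and> v \<in> V \<and> u \<noteq> v \<and> A v u)"

definition del :: "('a \<Rightarrow> 'a \<Rightarrow> bool) \<Rightarrow> 'a set \<Rightarrow> 'a \<Rightarrow> 'a \<Rightarrow> bool" where
  "del A S u v \<longleftrightarrow> A u v \<and> u \<notin> S \<and> v \<notin> S"

abbreviation cnt where "cnt V A \<equiv> card {D. good V A D}"

lemma wfg_del: "wfg V A \<Longrightarrow> wfg (V - S) (del A S)"
  by (auto simp: wfg_def del_def)

lemma fin_good: "finite V \<Longrightarrow> finite {D. good V A D}"
  by (rule finite_subset[of _ "Pow V"]) (auto simp: good_def)

lemma goodD: "good V A D \<Longrightarrow> D \<subseteq> V" by (simp add: good_def)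
lemma good_out: "good V A D \<Longrightarrow> v \<in> V \<Longrightarrow> v \<notin> D \<Longrightarrow> \<exists>!u. u\<in>D \<and> A u v"
  by (simp add: good_def)
lemma good_outE:
  assumes "good V A D" "v \<in> V" "v \<notin> D"
  obtains u where "u \<in> D" "A u v" "\<And>w. w\<in>D \<Longrightarrow> A w v \<Longrightarrow> w = u"
  using good_out[OF assms] by metis
lemma good_min: "good V A D \<Longrightarrow> x\<in>D \<Longrightarrow> y\<in>D \<Longrightarrow> (\<And>z. A z x \<longleftrightarrow> z = y) \<Longrightarrow> False"
  unfolding good_def by blast
lemma goodI:
  assumes "D \<subseteq> V" "\<And>v. v\<in>V \<Longrightarrow> v\<notin>D \<Longrightarrow> \<exists>!u. u\<in>D \<and> A u v"
    "\<And>x y. x\<in>D \<Longrightarrow> y\<in>D \<Longrightarrow> \<forall>z. A z x \<longleftrightarrow> z = y \<Longrightarrow> False"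
  shows "good V A D"
  unfolding good_def using assms by blast
lemma ex1I2: "u \<in> D \<Longrightarrow> A u v \<Longrightarrow> (\<And>w. w\<in>D \<Longrightarrow> A w v \<Longrightarrow> w = u) \<Longrightarrow> \<exists>!u. u\<in>D \<and> A u v"
  by blast

lemma closed_good:
  assumes cl: "\<forall>u v. A u v \<longrightarrow> (u \<in> S \<longleftrightarrow> v \<in> S)" and g: "good V A D"
  shows "good (V - S) (del A S) (D - S)"
proof -
  have 1: "D \<subseteq> V" "\<forall>v\<in>V-D. \<exists>!u. u\<in>D \<and> A u v" "\<forall>x\<in>D. \<not>(\<exists>y\<in>D. \<forall>z. A z x \<longleftrightarrow> z = y)"
    using g unfolding good_def by auto
  have 2: "\<exists>!u. u\<in>D-S \<and> del A S u v" if v: "v \<in> (V-S)-(D-S)" for v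
  proof -
    have "v \<in> V - D" "v \<notin> S" using v by auto
    then obtain u where u: "u \<in> D" "A u v" and uu: "\<And>w. w \<in> D \<Longrightarrow> A w v \<Longrightarrow> w = u"
      using 1(2) by metis
    have "u \<notin> S" using u(2) \<open>v \<notin> S\<close> cl by blast
    show ?thesis
    proof (rule ex1I[of _ u])
      show "u \<in> D - S \<and> del A S u v" using u \<open>u \<notin> S\<close> \<open>v \<notin> S\<close> by (simp add: del_def)
      fix w assume "w \<in> D - S \<and> del A S w v"
      then show "w = u" using uu by (simp add: del_def)
    qed
  qed
  have 3: "\<not>(\<exists>y\<in>D-S. \<forall>z. del A S z x \<longleftrightarrow> z = y)" if x: "x \<in> D - S" for x
  proof
    assume "\<exists>y\<in>D-S. \<forall>z. del A S z x \<longleftrightarrow> z = y"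
    then obtain y where y: "y \<in> D - S" and yy: "\<And>z. del A S z x \<longleftrightarrow> z = y" by blast
    have "A z x \<longleftrightarrow> z = y" for z
    proof
      assume a: "A z x"
      then have "z \<notin> S" using x cl by blast
      then have "del A S z x" using a x by (simp add: del_def)
      then show "z = y" using yy by blast
    next
      assume "z = y" then show "A z x" using yy[of y] by (simp add: del_def)
    qed
    then show False using 1(3) x y by blast
  qed
  show ?thesis unfolding good_def using 1(1) 2 3 by blast
qed

lemma card_le_inj:
  assumes "inj_on f X" "f ` X \<subseteq> Y" "finite Y"
  shows "card X \<le> card Y"
  using card_inj_on_le[OF assms] .

lemma red0:
  assumes w: "wfg V A" and x: "x \<in> V" and iso: "\<forall>z. \<not> A z x"
  shows "cnt V A \<le> cnt (V - {x}) (del A {x})"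
proof (rule card_le_inj[of "\<lambda>D. D - {x}"])
  have xD: "x \<in> D" if "good V A D" for D
    using that x iso unfolding good_def by blast
  show "inj_on (\<lambda>D. D - {x}) {D. good V A D}"
    by (rule inj_onI) (metis insert_Diff mem_Collect_eq xD)
  have cl: "\<forall>u v. A u v \<longrightarrow> (u \<in> {x} \<longleftrightarrow> v \<in> {x})" using iso w unfolding wfg_def by blast
  show "(\<lambda>D. D - {x}) ` {D. good V A D} \<subseteq> {D. good (V - {x}) (del A {x}) D}"
    using closed_good[OF cl] by blast
  show "finite {D. good (V - {x}) (del A {x}) D}" using w by (auto simp: wfg_def intro: fin_good)
qed

lemma red1:
  assumes w: "wfg V A" and nx: "\<forall>z. A z x \<longleftrightarrow> z = p" and np: "\<forall>z. A z p \<longleftrightarrow> z = x"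
  shows "cnt V A \<le> 2 * cnt (V - {x,p}) (del A {x,p})"
proof -
  let ?G = "{D. good V A D}" and ?H = "{D. good (V - {x,p}) (del A {x,p}) D}"
  have fin: "finite ?H" using w by (auto simp: wfg_def intro: fin_good)
  have Axp: "A p x" "A x p" using nx np by auto
  have V: "x \<in> V" "p \<in> V" using Axp w unfolding wfg_def by blast+
  have cl: "\<forall>u v. A u v \<longrightarrow> (u \<in> {x,p} \<longleftrightarrow> v \<in> {x,p})"
  proof (intro allI impI)
    fix u v assume a: "A u v"
    then have "A v u" using w unfolding wfg_def by blast
    then show "(u \<in> {x,p} \<longleftrightarrow> v \<in> {x,p})" using a nx np by auto
  qed
  have sub: "(\<lambda>D. D - {x,p}) ` X \<subseteq> ?H" if "X \<subseteq> ?G" for X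
    using closed_good[OF cl] that by blast
  have c1: "card {D\<in>?G. x \<in> D} \<le> card ?H"
  proof (rule card_le_inj[of "\<lambda>D. D - {x,p}"])
    have "p \<notin> D" if "good V A D" "x \<in> D" for D
      using that nx good_min by metis
    moreover have "D = insert x (D - {x,p})" if "x \<in> D" "p \<notin> D" for D using that by auto
    ultimately show "inj_on (\<lambda>D. D - {x,p}) {D\<in>?G. x \<in> D}"
      by (intro inj_onI) (metis (no_types, lifting) mem_Collect_eq)
  next
    show "(\<lambda>D. D - {x,p}) ` {D\<in>?G. P D} \<subseteq> ?H" for P by (rule sub) blast
  next
    show "finite ?H" by (rule fin)
  qed
  have c2: "card {D\<in>?G. x \<notin> D} \<le> card ?H"
  proof (rule card_le_inj[of "\<lambda>D. D - {x,p}"])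
    have "p \<in> D" if g: "good V A D" "x \<notin> D" for D
      using good_outE[OF g(1) V(1) g(2)] nx by metis
    moreover have "D = insert p (D - {x,p})" if "x \<notin> D" "p \<in> D" for D using that by auto
    ultimately show "inj_on (\<lambda>D. D - {x,p}) {D\<in>?G. x \<notin> D}"
      by (intro inj_onI) (metis (no_types, lifting) mem_Collect_eq)
  next
    show "(\<lambda>D. D - {x,p}) ` {D\<in>?G. P D} \<subseteq> ?H" for P by (rule sub) blast
  next
    show "finite ?H" by (rule fin)
  qed
  have "?G = {D\<in>?G. x \<in> D} \<union> {D\<in>?G. x \<notin> D}" by auto
  then have "card ?G \<le> card {D\<in>?G. x \<in> D} + card {D\<in>?G. x \<notin> D}"
    by (metis card_Un_le)
  then show ?thesis using c1 c2 by simp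
qed

lemma wfgD: "wfg V A \<Longrightarrow> A u v \<Longrightarrow> u \<in> V \<and> v \<in> V \<and> u \<noteq> v \<and> A v u"
  by (simp add: wfg_def)

lemma leaf_notin:
  assumes w: "wfg V A" and nx: "\<forall>z. A z x \<longleftrightarrow> z = p" and nx2: "\<forall>z. A z x2 \<longleftrightarrow> z = p"
    and d: "x \<noteq> x2" and g: "good V A D"
  shows "x2 \<notin> D"
proof
  assume x2: "x2 \<in> D"
  have a: "A p x" "A p x2" using nx nx2 by auto
  have V: "x \<in> V" "p \<in> V" "A x p" "A x2 p" using wfgD[OF w a(1)] wfgD[OF w a(2)] by auto
  have pD: "p \<notin> D" using good_min[OF g x2] nx2 by metis
  obtain u where u: "u \<in> D" "A u p" "\<And>w. w\<in>D \<Longrightarrow> A w p \<Longrightarrow> w = u"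
    using good_outE[OF g V(2) pD] by metis
  have "u = x2" using u(3)[OF x2 V(4)] by simp
  then have "x \<notin> D" using u(3)[of x] V(3) d by auto
  then obtain u' where "u' \<in> D" "A u' x" using good_outE[OF g V(1)] by metis
  then show False using nx pD by auto
qed

lemma red2:
  assumes w: "wfg V A" and nx: "\<forall>z. A z x \<longleftrightarrow> z = p" and nx2: "\<forall>z. A z x2 \<longleftrightarrow> z = p"
    and d: "x \<noteq> x2"
  shows "cnt V A \<le> cnt (V - {x2}) (del A {x2})"
proof (rule card_le_inj[of id])
  show "inj_on id {D. good V A D}" by simp
  show "finite {D. good (V - {x2}) (del A {x2}) D}" using w by (auto simp: wfg_def intro: fin_good)
  show "id ` {D. good V A D} \<subseteq> {D. good (V - {x2}) (del A {x2}) D}"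
  proof clarsimp
    fix D assume g: "good V A D"
    have n2: "x2 \<notin> D" by (rule leaf_notin[OF w nx nx2 d g])
    have n1: "x \<notin> D" by (rule leaf_notin[OF w nx2 nx _ g]) (use d in auto)
    show "good (V - {x2}) (del A {x2}) D"
    proof (rule goodI)
      show "D \<subseteq> V - {x2}" using goodD[OF g] n2 by auto
    next
      fix v assume v: "v \<in> V - {x2}" "v \<notin> D"
      obtain u where u: "u \<in> D" "A u v" "\<And>w. w\<in>D \<Longrightarrow> A w v \<Longrightarrow> w = u"
        using good_outE[OF g _ v(2)] v(1) by blast
      show "\<exists>!u. u \<in> D \<and> del A {x2} u v"
        using u v n2 unfolding del_def by blast
    next
      fix y' y assume y': "y' \<in> D" and y: "y \<in> D" and yy: "\<forall>z. del A {x2} z y' \<longleftrightarrow> z = y"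
      show False
      proof (cases "y' = p")
        case True
        have "A x p" using nx wfgD[OF w] by blast
        moreover have "p \<noteq> x2" using nx2 wfgD[OF w] by blast
        ultimately have "del A {x2} x p" using d unfolding del_def by simp
        then show False using yy y True n1 by metis
      next
        case False
        have "\<not> A x2 y'" using nx2 wfgD[OF w] False by blast
        moreover have "y' \<noteq> x2" "y \<noteq> x2" using n2 y' y by auto
        ultimately have "A z y' \<longleftrightarrow> z = y" for z using yy unfolding del_def by (cases "z = x2") auto
        then show False using good_min[OF g y' y] by blast
      qed
    qed
  qed
qed

locale cfg =
  fixes V :: "'a set" and A x p q
  assumes w: "wfg V A" and nx: "\<forall>z. A z x \<longleftrightarrow> z = p"
    and np: "\<forall>z. A z p \<longleftrightarrow> z = x \<or> z = q" and qx: "q \<noteq> x"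
begin

lemma basic: "A x p" "A p x" "A q p" "A p q" "x \<noteq> p" "p \<noteq> q" "x \<in> V" "p \<in> V" "q \<in> V"
  using nx np qx wfgD[OF w, of p x] wfgD[OF w, of q p] by auto

lemma nbx: "A x z \<longleftrightarrow> z = p" using nx wfgD[OF w] by blast
lemma nbp: "A p z \<longleftrightarrow> z = x \<or> z = q" using np wfgD[OF w] by blast

definition gB where "gB D = (if q \<in> D then D - {p} else D)"

lemma B_good:
  assumes g: "good V A D" and xD: "x \<notin> D"
  shows "good (V - {x}) (del A {x}) (gB D)"
proof -
  obtain u where "u \<in> D" "A u x" using good_outE[OF g basic(7) xD] by blast
  then have pD: "p \<in> D" using nx by simp
  show ?thesis
  proof (cases "q \<in> D")
    case False
    then have e: "gB D = D" by (simp add: gB_def)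
    show ?thesis unfolding e
    proof (rule goodI)
      show "D \<subseteq> V - {x}" using goodD[OF g] xD by auto
    next
      fix v assume v: "v \<in> V - {x}" "v \<notin> D"
      have vV: "v \<in> V" using v(1) by simp
      obtain u where u: "u \<in> D" "A u v" "\<And>w. w\<in>D \<Longrightarrow> A w v \<Longrightarrow> w = u"
        using good_outE[OF g vV v(2)] by blast
      have "u \<noteq> x" using u(1) xD by auto
      show "\<exists>!u. u \<in> D \<and> del A {x} u v"
      proof (rule ex1I[of _ u])
        show "u \<in> D \<and> del A {x} u v" using u(1,2) v \<open>u \<noteq> x\<close> by (simp add: del_def)
        fix w' assume "w' \<in> D \<and> del A {x} w' v" then show "w' = u" using u(3) unfolding del_def by blast
      qed
    next
      fix y' y assume y': "y' \<in> D" and y: "y \<in> D" and yy: "\<forall>z. del A {x} z y' \<longleftrightarrow> z = y"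
      show False
      proof (cases "y' = p")
        case True
        have "del A {x} q p" using basic qx unfolding del_def by simp
        then have "q = y" using yy True by simp
        then show False using y False by simp
      next
        case c: False
        have "\<not> A x y'" using nbx c by simp
        moreover have "y' \<noteq> x" "y \<noteq> x" using xD y' y by auto
        ultimately have "A z y' \<longleftrightarrow> z = y" for z using yy unfolding del_def by (cases "z = x") auto
        then show False using good_min[OF g y' y] by blast
      qed
    qed
  next
    case True
    then have e: "gB D = D - {p}" by (simp add: gB_def)
    show ?thesis unfolding e
    proof (rule goodI)
      show "D - {p} \<subseteq> V - {x}" using goodD[OF g] xD by auto
    next
      fix v assume v: "v \<in> V - {x}" "v \<notin> D - {p}"
      show "\<exists>!u. u \<in> D - {p} \<and> del A {x} u v"
      proof (cases "v = p")
        case True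
        show ?thesis
        proof (rule ex1I[of _ q])
          show "q \<in> D - {p} \<and> del A {x} q v" using True \<open>q \<in> D\<close> basic qx by (simp add: del_def)
          fix w assume "w \<in> D - {p} \<and> del A {x} w v"
          then have "A w p" "w \<noteq> x" unfolding del_def using True by auto
          then show "w = q" using np by blast
        qed
      next
        case False
        then have vD: "v \<notin> D" using v by auto
        have vV: "v \<in> V" using v(1) by simp
        obtain u where u: "u \<in> D" "A u v" "\<And>w. w\<in>D \<Longrightarrow> A w v \<Longrightarrow> w = u"
          using good_outE[OF g vV vD] by blast
        have "u \<noteq> p" using u(2) nbp v(1) vD \<open>q \<in> D\<close> by auto
        moreover have "u \<noteq> x" using u(1) xD by auto
        ultimately show ?thesis
        proof (intro ex1I[of _ u])
          show "u \<in> D - {p} \<and> del A {x} u v" using u(1,2) v \<open>u \<noteq> p\<close> \<open>u \<noteq> x\<close> by (simp add: del_def)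
          fix w' assume "w' \<in> D - {p} \<and> del A {x} w' v" then show "w' = u" using u(3) unfolding del_def by blast
        qed
      qed
    next
      fix y' y assume y': "y' \<in> D - {p}" and y: "y \<in> D - {p}" and yy: "\<forall>z. del A {x} z y' \<longleftrightarrow> z = y"
      have "\<not> A x y'" using nbx y' by simp
      moreover have "y' \<noteq> x" "y \<noteq> x" using xD y' y by auto
      ultimately have "A z y' \<longleftrightarrow> z = y" for z using yy unfolding del_def by (cases "z = x") auto
      then show False using good_min[OF g, of y' y] y y' by blast
    qed
  qed
qed

lemma B_inj: "inj_on gB {D. good V A D \<and> x \<notin> D}"
proof (rule inj_on_inverseI[of _ "insert p"])
  fix D assume "D \<in> {D. good V A D \<and> x \<notin> D}"
  then have g: "good V A D" and xD: "x \<notin> D" by auto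
  obtain u where "u \<in> D" "A u x" using good_outE[OF g basic(7) xD] by blast
  then have pD: "p \<in> D" using nx by simp
  show "insert p (gB D) = D" using pD by (auto simp: gB_def)
qed

end

locale cfg3 = cfg +
  assumes uq: "\<And>r1 r2. A r1 q \<Longrightarrow> A r2 q \<Longrightarrow> r1 \<noteq> p \<Longrightarrow> r2 \<noteq> p \<Longrightarrow>
     (\<exists>z. A z r1 \<and> z \<noteq> q) \<Longrightarrow> (\<exists>z. A z r2 \<and> z \<noteq> q) \<Longrightarrow> r1 = r2"
begin

definition sp where "sp D r \<longleftrightarrow> A r q \<and> r \<noteq> p \<and> (\<exists>s\<in>D. \<forall>z. (A z r \<and> z \<noteq> q) \<longleftrightarrow> z = s)"
definition mA where "mA D = D - {x} - {r\<in>D. sp D r}"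
definition invA where "invA D' = insert x (D' \<union> (if (\<exists>r\<in>D'. A r q) then {} else {r. sp D' r}))"

lemma A_facts:
  assumes g: "good V A D" and xD: "x \<in> D"
  obtains r where "p \<notin> D" "q \<notin> D" "r \<in> D" "A r q" "\<forall>w. w \<in> D \<and> A w q \<longrightarrow> w = r"
    "r \<noteq> p" "r \<noteq> x" "r \<noteq> q" "\<not> A x r" "\<not> A p r"
proof -
  have pD: "p \<notin> D"
  proof
    assume "p \<in> D" then show False using good_min[OF g xD, of p] nx by blast
  qed
  obtain u where u: "u \<in> D" "A u p" "\<And>w. w\<in>D \<Longrightarrow> A w p \<Longrightarrow> w = u"
    using good_outE[OF g basic(8) pD] by blast
  have "u = x" using u(3)[OF xD basic(1)] by simp
  then have qD: "q \<notin> D" using u(3)[of q] basic(3) qx by blast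
  obtain r where r: "r \<in> D" "A r q" "\<And>w. w\<in>D \<Longrightarrow> A w q \<Longrightarrow> w = r"
    using good_outE[OF g basic(9) qD] by blast
  have rp: "r \<noteq> p" using r(1) pD by blast
  have rx: "r \<noteq> x" proof assume "r = x" then show False using r(2) nbx basic(6) by simp qed
  have rq: "r \<noteq> q" using r(1) qD by blast
  have "\<not> A x r" using nbx rp by simp
  moreover have "\<not> A p r" using nbp rx rq by simp
  moreover have "\<forall>w. w \<in> D \<and> A w q \<longrightarrow> w = r" using r(3) by blast
  ultimately show ?thesis using that pD qD r(1,2) rp rx rq by blast
qed


lemma symA: "A u v \<Longrightarrow> A v u" using wfgD[OF w] by blast
lemma irrA: "A u v \<Longrightarrow> u \<noteq> v" using wfgD[OF w] by blast

lemma A_good: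
  assumes g: "good V A D" and xD: "x \<in> D"
  shows "good (V - {x,p,q}) (del A {x,p,q}) (mA D)"
proof -
  obtain r where pD: "p \<notin> D" and qD: "q \<notin> D" and r: "r \<in> D" "A r q"
    and ru: "\<forall>w. w \<in> D \<and> A w q \<longrightarrow> w = r" and rne: "r \<noteq> p" "r \<noteq> x" "r \<noteq> q"
    and nxr: "\<not> A x r" and npr: "\<not> A p r"
    using A_facts[OF g xD] by blast
  have DV: "D \<subseteq> V" by (rule goodD[OF g])
  have sp1: "r' = r" if "r' \<in> D" "sp D r'" for r' using ru that unfolding sp_def by blast
  have spr: "{r'\<in>D. sp D r'} = (if sp D r then {r} else {})"
  proof (rule set_eqI)
    fix r' show "r' \<in> {r'\<in>D. sp D r'} \<longleftrightarrow> r' \<in> (if sp D r then {r} else {})"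
    proof (cases "r' \<in> D \<and> sp D r'")
      case True then have "r' = r" using sp1[of r'] by blast
      then show ?thesis using True by simp
    next
      case False then show ?thesis using r(1) by auto
    qed
  qed
  have other: "del A {x,p,q} z y \<longleftrightarrow> A z y" if y: "y \<in> D" "y \<noteq> r" "y \<noteq> x" for z y
  proof -
    have "\<not> A x y" using nbx y pD by auto
    moreover have "\<not> A p y" using nbp y qD by auto
    moreover have "\<not> A q y" using ru y symA by blast
    moreover have "y \<notin> {x,p,q}" using y pD qD by auto
    ultimately show ?thesis unfolding del_def by auto
  qed
  have minother: False if y': "y' \<in> D" "y' \<noteq> r" "y' \<noteq> x" and y: "y \<in> D" "y \<noteq> x"
    and yy: "\<forall>z. del A {x,p,q} z y' \<longleftrightarrow> z = y" for y' y
  proof -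
    have "A z y' \<longleftrightarrow> z = y" for z using yy other[OF y'] by blast
    then show False using good_min[OF g y'(1) y(1)] by blast
  qed
  have outgen: "\<exists>!u. u \<in> D - {x} - R \<and> del A {x,p,q} u v"
    if v: "v \<in> V - {x,p,q}" "v \<notin> D" and R: "R \<subseteq> {r}" and Rr: "r \<in> R \<Longrightarrow> \<not> A r v" for v R
  proof -
    have vV: "v \<in> V" using v by simp
    obtain u where u: "u \<in> D" "A u v" "\<And>w. w\<in>D \<Longrightarrow> A w v \<Longrightarrow> w = u"
      using good_outE[OF g vV v(2)] by blast
    have ux: "u \<noteq> x" proof assume "u = x" then show False using u(2) nbx v(1) by simp qed
    have uR: "u \<notin> R" using Rr u(2) R by blast
    have upq: "u \<notin> {x,p,q}" using ux u(1) pD qD by auto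
    show ?thesis
    proof (rule ex1I[of _ u])
      show "u \<in> D - {x} - R \<and> del A {x,p,q} u v" using u(1,2) ux uR upq v(1) by (simp add: del_def)
      fix w' assume "w' \<in> D - {x} - R \<and> del A {x,p,q} w' v"
      then show "w' = u" using u(3) unfolding del_def by blast
    qed
  qed
  show ?thesis
  proof (cases "sp D r")
    case False
    then have e: "mA D = D - {x} - {}" unfolding mA_def spr by simp
    show ?thesis unfolding e
    proof (rule goodI)
      show "D - {x} - {} \<subseteq> V - {x,p,q}" using DV pD qD by auto
    next
      fix v assume v: "v \<in> V - {x,p,q}" "v \<notin> D - {x} - {}"
      then show "\<exists>!u. u \<in> D - {x} - {} \<and> del A {x,p,q} u v"
        using outgen[of v "{}"] by auto
    next
      fix y' y assume y': "y' \<in> D - {x} - {}" and y: "y \<in> D - {x} - {}"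
        and yy: "\<forall>z. del A {x,p,q} z y' \<longleftrightarrow> z = y"
      show False
      proof (cases "y' = r")
        case True
        have "(A z r \<and> z \<noteq> q) \<longleftrightarrow> z = y" for z
        proof
          assume a: "A z r \<and> z \<noteq> q"
          then have "z \<noteq> x" "z \<noteq> p" using nxr npr by auto
          then have "del A {x,p,q} z r" using a rne unfolding del_def by simp
          then show "z = y" using yy True by simp
        next
          assume "z = y"
          then have "del A {x,p,q} z r" using yy True by simp
          then show "A z r \<and> z \<noteq> q" unfolding del_def by simp
        qed
        then have "sp D r" unfolding sp_def using r(2) rne y by blast
        then show False using False by simp
      next
        case c: False
        show False using minother[of y' y] y' y yy c by blast
      qed
    qed
  next
    case True
    then obtain s where s: "s \<in> D" "\<forall>z. (A z r \<and> z \<noteq> q) \<longleftrightarrow> z = s" unfolding sp_def by blast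
    have Asr: "A s r" "s \<noteq> q" using s(2) by blast+
    have sx: "s \<noteq> x" using Asr nxr by blast
    have sr: "s \<noteq> r" using irrA[OF Asr(1)] .
    have e: "mA D = D - {x} - {r}" unfolding mA_def spr using True by simp
    show ?thesis unfolding e
    proof (rule goodI)
      show "D - {x} - {r} \<subseteq> V - {x,p,q}" using DV pD qD by auto
    next
      fix v assume v: "v \<in> V - {x,p,q}" "v \<notin> D - {x} - {r}"
      show "\<exists>!u. u \<in> D - {x} - {r} \<and> del A {x,p,q} u v"
      proof (cases "v = r")
        case True
        show ?thesis
        proof (rule ex1I[of _ s])
          show "s \<in> D - {x} - {r} \<and> del A {x,p,q} s v"
            using True s(1) sx sr Asr pD rne unfolding del_def by auto
          fix w' assume "w' \<in> D - {x} - {r} \<and> del A {x,p,q} w' v"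
          then have "A w' r \<and> w' \<noteq> q" using True unfolding del_def by simp
          then show "w' = s" using s(2) by blast
        qed
      next
        case False
        then have vD: "v \<notin> D" using v by auto
        have "\<not> A r v"
        proof
          assume "A r v"
          then have "A v r \<and> v \<noteq> q" using symA v(1) by auto
          then have "v = s" using s(2) by blast
          then show False using vD s(1) by simp
        qed
        then show ?thesis using outgen[of v "{r}"] v(1) vD by blast
      qed
    next
      fix y' y assume y': "y' \<in> D - {x} - {r}" and y: "y \<in> D - {x} - {r}"
        and yy: "\<forall>z. del A {x,p,q} z y' \<longleftrightarrow> z = y"
      show False using minother[of y' y] y' y yy by blast
    qed
  qed
qed

lemma mA_eq:
  assumes r: "r \<in> D" and ru: "\<forall>w. w \<in> D \<and> A w q \<longrightarrow> w = r"
  shows "mA D = (if sp D r then D - {x} - {r} else D - {x})"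
proof -
  have sp1: "r' = r" if "r' \<in> D" "sp D r'" for r' using ru that unfolding sp_def by blast
  have spr: "{r'\<in>D. sp D r'} = (if sp D r then {r} else {})"
  proof (rule set_eqI)
    fix r' show "r' \<in> {r'\<in>D. sp D r'} \<longleftrightarrow> r' \<in> (if sp D r then {r} else {})"
    proof (cases "r' \<in> D \<and> sp D r'")
      case True then have "r' = r" using sp1[of r'] by blast
      then show ?thesis using True by simp
    next
      case False then show ?thesis using r(1) by auto
    qed
  qed
  show ?thesis unfolding mA_def spr by simp
qed

lemma A_inv:
  assumes g: "good V A D" and xD: "x \<in> D"
  shows "invA (mA D) = D"
proof -
  obtain r where pD: "p \<notin> D" and qD: "q \<notin> D" and r: "r \<in> D" "A r q"
    and ru: "\<forall>w. w \<in> D \<and> A w q \<longrightarrow> w = r" and rne: "r \<noteq> p" "r \<noteq> x" "r \<noteq> q"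
    and nxr: "\<not> A x r" and npr: "\<not> A p r"
    using A_facts[OF g xD] by blast
  show ?thesis
  proof (cases "sp D r")
    case False
    then have e: "mA D = D - {x}" using mA_eq[OF r(1) ru] by simp
    have "\<exists>r'\<in>mA D. A r' q" using e r rne by blast
    then show ?thesis unfolding invA_def using e xD by auto
  next
    case True
    then have e: "mA D = D - {x} - {r}" using mA_eq[OF r(1) ru] by simp
    have n: "\<not>(\<exists>r'\<in>mA D. A r' q)"
    proof
      assume "\<exists>r'\<in>mA D. A r' q"
      then obtain r' where "r' \<in> D" "r' \<noteq> r" "A r' q" using e by blast
      then show False using ru by blast
    qed
    obtain s where s: "s \<in> D" "\<forall>z. (A z r \<and> z \<noteq> q) \<longleftrightarrow> z = s" using True unfolding sp_def by blast
    have Asr: "A s r" "s \<noteq> q" using s(2) by blast+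
    have sx: "s \<noteq> x" using Asr nxr by blast
    have sr: "s \<noteq> r" using irrA[OF Asr(1)] .
    have T: "{r''. sp (mA D) r''} = {r}"
    proof (rule set_eqI)
      fix r'' show "r'' \<in> {r''. sp (mA D) r''} \<longleftrightarrow> r'' \<in> {r}"
      proof
        assume "r'' \<in> {r''. sp (mA D) r''}"
        then obtain s' where h: "A r'' q" "r'' \<noteq> p" "\<forall>z. (A z r'' \<and> z \<noteq> q) \<longleftrightarrow> z = s'"
          unfolding sp_def by blast
        have "\<exists>z. A z r'' \<and> z \<noteq> q" using h(3) by blast
        moreover have "\<exists>z. A z r \<and> z \<noteq> q" using Asr by blast
        ultimately have "r'' = r" using uq[OF h(1) r(2) h(2) rne(1)] by blast
        then show "r'' \<in> {r}" by simp
      next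
        assume "r'' \<in> {r}"
        then have "r'' = r" by simp
        moreover have "s \<in> mA D" using e s(1) sx sr by blast
        ultimately show "r'' \<in> {r''. sp (mA D) r''}" unfolding sp_def using r(2) rne(1) s(2) by blast
      qed
    qed
    show ?thesis unfolding invA_def using n T e xD r(1) by auto
  qed
qed

lemma A_inj: "inj_on mA {D. good V A D \<and> x \<in> D}"
  by (rule inj_on_inverseI[of _ invA]) (use A_inv in blast)

lemma red3: "cnt V A \<le> cnt (V - {x}) (del A {x}) + cnt (V - {x,p,q}) (del A {x,p,q})"
proof -
  let ?G = "{D. good V A D}"
  have fin: "finite V" using w by (simp add: wfg_def)
  have c1: "card {D\<in>?G. x \<notin> D} \<le> cnt (V - {x}) (del A {x})"
  proof (rule card_le_inj[of gB])
    show "inj_on gB {D\<in>?G. x \<notin> D}" using B_inj by simp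
    show "gB ` {D\<in>?G. x \<notin> D} \<subseteq> {D. good (V - {x}) (del A {x}) D}" using B_good by blast
    show "finite {D. good (V - {x}) (del A {x}) D}" using fin by (simp add: fin_good)
  qed
  have c2: "card {D\<in>?G. x \<in> D} \<le> cnt (V - {x,p,q}) (del A {x,p,q})"
  proof (rule card_le_inj[of mA])
    show "inj_on mA {D\<in>?G. x \<in> D}" using A_inj by simp
    show "mA ` {D\<in>?G. x \<in> D} \<subseteq> {D. good (V - {x,p,q}) (del A {x,p,q}) D}" using A_good by blast
    show "finite {D. good (V - {x,p,q}) (del A {x,p,q}) D}" using fin by (simp add: fin_good)
  qed
  have "?G = {D\<in>?G. x \<in> D} \<union> {D\<in>?G. x \<notin> D}" by auto
  then have "card ?G \<le> card {D\<in>?G. x \<in> D} + card {D\<in>?G. x \<notin> D}"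
    by (metis card_Un_le)
  then show ?thesis using c1 c2 by simp
qed
end

definition pdec :: "'a set \<Rightarrow> ('a \<Rightarrow> 'a \<Rightarrow> bool) \<Rightarrow> 'a set list \<Rightarrow> bool" where
  "pdec V A bs \<longleftrightarrow> (\<forall>B\<in>set bs. B \<subseteq> V \<and> card B \<le> 2) \<and> V \<subseteq> \<Union>(set bs) \<and>
     (\<forall>u v. A u v \<longrightarrow> (\<exists>i<length bs. u \<in> bs!i \<and> v \<in> bs!i)) \<and>
     (\<forall>v i j l. i \<le> j \<and> j \<le> l \<and> l < length bs \<and> v \<in> bs!i \<and> v \<in> bs!l \<longrightarrow> v \<in> bs!j)"

lemma pdec_del:
  assumes "pdec V A bs" "finite V"
  shows "pdec (V - S) (del A S) (map (\<lambda>B. B - S) bs)"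
proof -
  have 1: "card (B - S) \<le> 2" if "B \<in> set bs" for B
  proof -
    have "B \<subseteq> V" "card B \<le> 2" using assms(1) that unfolding pdec_def by auto
    then have "finite B" using assms(2) finite_subset by blast
    then show ?thesis using \<open>card B \<le> 2\<close> card_Diff_subset_Int[of B S] by (metis card_Diff1_le card_mono Diff_subset le_trans)
  qed
  have a: "\<forall>B\<in>set bs. B \<subseteq> V" "V \<subseteq> \<Union>(set bs)"
    "\<forall>u v. A u v \<longrightarrow> (\<exists>i<length bs. u \<in> bs!i \<and> v \<in> bs!i)"
    "\<forall>v i j l. i \<le> j \<and> j \<le> l \<and> l < length bs \<and> v \<in> bs!i \<and> v \<in> bs!l \<longrightarrow> v \<in> bs!j"
    using assms(1) unfolding pdec_def by blast+
  let ?bs = "map (\<lambda>B. B - S) bs"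
  have b1: "\<forall>B\<in>set ?bs. B \<subseteq> V - S \<and> card B \<le> 2" using a(1) 1 by auto
  have b2: "V - S \<subseteq> \<Union>(set ?bs)"
  proof
    fix v assume "v \<in> V - S"
    then obtain B where "B \<in> set bs" "v \<in> B" "v \<notin> S" using a(2) by blast
    then show "v \<in> \<Union>(set ?bs)" by auto
  qed
  have b3: "\<forall>u v. del A S u v \<longrightarrow> (\<exists>i<length ?bs. u \<in> ?bs!i \<and> v \<in> ?bs!i)"
  proof (intro allI impI)
    fix u v assume "del A S u v"
    then have h: "A u v" "u \<notin> S" "v \<notin> S" unfolding del_def by auto
    then obtain i where "i < length bs" "u \<in> bs!i" "v \<in> bs!i" using a(3) by blast
    then show "\<exists>i<length ?bs. u \<in> ?bs!i \<and> v \<in> ?bs!i" using h by auto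
  qed
  have b4: "\<forall>v i j l. i \<le> j \<and> j \<le> l \<and> l < length ?bs \<and> v \<in> ?bs!i \<and> v \<in> ?bs!l \<longrightarrow> v \<in> ?bs!j"
  proof (intro allI impI)
    fix v i j l assume h: "i \<le> j \<and> j \<le> l \<and> l < length ?bs \<and> v \<in> ?bs!i \<and> v \<in> ?bs!l"
    then have "i < length bs" "j < length bs" "l < length bs" by auto
    then have "v \<in> bs!i" "v \<in> bs!l" "v \<notin> S" using h by auto
    then have "v \<in> bs!j" using a(4)[rule_format, of i j l v] h \<open>l < length bs\<close> by blast
    then show "v \<in> ?bs!j" using \<open>v \<notin> S\<close> \<open>j < length bs\<close> by simp
  qed
  show ?thesis unfolding pdec_def by (intro conjI b1 b2 b3 b4)
qed

context
  fixes V :: "'a set" and A bs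
  assumes w: "wfg V A" and pd: "pdec V A bs"
begin

definition inb where "inb v i \<longleftrightarrow> i < length bs \<and> v \<in> bs!i"

lemma conv: "inb v i \<Longrightarrow> inb v l \<Longrightarrow> i \<le> j \<Longrightarrow> j \<le> l \<Longrightarrow> inb v j"
  using pd unfolding pdec_def inb_def by (meson le_less_trans)

lemma three: "inb a i \<Longrightarrow> inb b i \<Longrightarrow> inb c i \<Longrightarrow> a \<noteq> b \<Longrightarrow> a \<noteq> c \<Longrightarrow> b \<noteq> c \<Longrightarrow> False"
proof -
  assume h: "inb a i" "inb b i" "inb c i" "a \<noteq> b" "a \<noteq> c" "b \<noteq> c"
  have B: "bs!i \<in> set bs" using h(1) unfolding inb_def by simp
  then have "bs!i \<subseteq> V" "card (bs!i) \<le> 2" using pd unfolding pdec_def by auto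
  then have f: "finite (bs!i)" using w unfolding wfg_def using finite_subset by blast
  have "{a,b,c} \<subseteq> bs!i" using h unfolding inb_def by auto
  then have "card {a,b,c} \<le> card (bs!i)" using f card_mono by blast
  moreover have "card {a,b,c} = 3" using h(4-6) by simp
  ultimately show False using \<open>card (bs!i) \<le> 2\<close> by simp
qed

lemma edge: "A u v \<Longrightarrow> \<exists>j. inb u j \<and> inb v j"
  using pd unfolding pdec_def inb_def by blast

definition R where "R v = Max {i. inb v i}"

lemma R_props: assumes "v \<in> V" shows "inb v (R v)" "\<And>i. inb v i \<Longrightarrow> i \<le> R v"
proof -
  have fin: "finite {i. inb v i}" by (rule finite_subset[of _ "{..<length bs}"]) (auto simp: inb_def)
  obtain B where "B \<in> set bs" "v \<in> B" using assms pd unfolding pdec_def by blast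
  then obtain i where "inb v i" unfolding inb_def by (metis in_set_conv_nth)
  then have ne: "{i. inb v i} \<noteq> {}" by blast
  show "inb v (R v)" unfolding R_def using Max_in[OF fin ne] by simp
  show "\<And>i. inb v i \<Longrightarrow> i \<le> R v" unfolding R_def using Max_ge[OF fin] by simp
qed

lemma inbV: "inb v i \<Longrightarrow> v \<in> V"
  using pd unfolding pdec_def inb_def by (meson nth_mem subsetD)

lemma Asym: "A u v \<Longrightarrow> A v u" and Airr: "A u v \<Longrightarrow> u \<noteq> v" and AV: "A u v \<Longrightarrow> u \<in> V"
  using w unfolding wfg_def by blast+

lemma config:
  assumes ne: "V \<noteq> {}"
  shows "(\<exists>x\<in>V. \<forall>z. \<not> A z x) \<or> (\<exists>x p. (\<forall>z. A z x \<longleftrightarrow> z = p) \<and> (\<forall>z. A z p \<longleftrightarrow> z = x)) \<or>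
     (\<exists>x x2 p. x \<noteq> x2 \<and> (\<forall>z. A z x \<longleftrightarrow> z = p) \<and> (\<forall>z. A z x2 \<longleftrightarrow> z = p)) \<or>
     (\<exists>x p q. cfg3 V A x p q)"
proof -
  have finV: "finite V" using w unfolding wfg_def by simp
  have "Min (R ` V) \<in> R ` V" using finV ne by simp
  then obtain x where xV: "x \<in> V" and xm: "R x = Min (R ` V)" by (metis imageE)
  have xmin: "R x \<le> R y" if "y \<in> V" for y
    unfolding xm using Min_le[OF finite_imageI[OF finV]] that by blast
  define k where "k = R x"
  have xk: "inb x k" unfolding k_def using R_props(1)[OF xV] .
  have kmin: "\<And>y. y \<in> V \<Longrightarrow> k \<le> R y" unfolding k_def using xmin .
  have upk: "inb y k" if "inb y j" "j \<le> k" for y j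
  proof -
    have yV: "y \<in> V" using inbV that(1) .
    show ?thesis using conv[OF that(1) R_props(1)[OF yV] that(2) kmin[OF yV]] .
  qed
  have c1: "inb y k" if a: "A y x" for y
  proof -
    obtain j where j: "inb y j" "inb x j" using edge[OF a] by blast
    have "j \<le> k" unfolding k_def using R_props(2)[OF xV j(2)] .
    then show ?thesis using upk j(1) by blast
  qed
  show ?thesis
  proof (cases "\<exists>p. A p x")
    case False then show ?thesis using xV by blast
  next
    case True
    then obtain p where Apx: "A p x" by blast
    have nx: "\<forall>z. A z x \<longleftrightarrow> z = p"
    proof (intro allI iffI)
      fix z assume "A z x"
      then show "z = p" using three[OF c1[OF \<open>A z x\<close>] c1[OF Apx] xk] Airr[OF \<open>A z x\<close>] Airr[OF Apx] by blast
    qed (use Apx in simp)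
    have pV: "p \<in> V" using AV[OF Apx] .
    define k' where "k' = R p"
    have pk': "inb p k'" unfolding k'_def using R_props(1)[OF pV] .
    have pk: "inb p k" using c1[OF Apx] .
    have kk': "k \<le> k'" unfolding k'_def using kmin[OF pV] .
    have xp: "x \<noteq> p" using Airr[OF Apx] by simp
    have c2: "inb y k'" if y: "A y p" "y \<noteq> x" "A z y" "z \<noteq> p" for y z
    proof -
      obtain j where j: "inb y j" "inb z j" using edge[OF y(3)[THEN Asym]] by blast
      have yp: "y \<noteq> p" using Airr[OF y(1)] .
      have zy: "z \<noteq> y" using Airr[OF y(3)] .
      have "\<not> j \<le> k"
      proof
        assume "j \<le> k"
        then have "inb y k" using upk j(1) by blast
        then show False using three[OF xk pk] xp y(2) yp by blast
      qed
      moreover have "\<not> (k < j \<and> j \<le> k')"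
      proof
        assume "k < j \<and> j \<le> k'"
        then have "inb p j" using conv[OF pk pk'] by simp
        then show False using three[OF _ j] yp y(4) zy by blast
      qed
      ultimately have jk': "k' < j" by linarith
      obtain j1 where j1: "inb y j1" "inb p j1" using edge[OF y(1)] by blast
      have "j1 \<le> k'" unfolding k'_def using R_props(2)[OF pV j1(2)] .
      then show ?thesis using conv[OF j1(1) j(1)] jk' by simp
    qed
    show ?thesis
    proof (cases "\<forall>z. A z p \<longrightarrow> z = x")
      case True
      have "\<forall>z. A z p \<longleftrightarrow> z = x" using True Asym[OF Apx] by blast
      then show ?thesis using nx by blast
    next
      case False
      then obtain y0 where y0: "A y0 p" "y0 \<noteq> x" by blast
      show ?thesis
      proof (cases "\<exists>y. A y p \<and> y \<noteq> x \<and> (\<forall>z. A z y \<longleftrightarrow> z = p)")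
        case True
        then obtain y where y: "A y p" "y \<noteq> x" "\<forall>z. A z y \<longleftrightarrow> z = p" by blast
        then show ?thesis using nx by blast
      next
        case False
        have nonleaf: "\<exists>z. A z y \<and> z \<noteq> p" if "A y p" "y \<noteq> x" for y
        proof -
          have "\<not>(\<forall>z. A z y \<longleftrightarrow> z = p)" using False that by blast
          then show ?thesis using Asym[OF that(1)] by blast
        qed
        have ink': "inb y k'" if "A y p" "y \<noteq> x" for y
          using nonleaf[OF that] c2[OF that] by blast
        define q where "q = y0"
        have qk': "inb q k'" unfolding q_def using ink'[OF y0] .
        have Aqp: "A q p" "q \<noteq> x" using y0 unfolding q_def by auto
        have qp: "q \<noteq> p" using Airr[OF Aqp(1)] .
        have np: "\<forall>z. A z p \<longleftrightarrow> z = x \<or> z = q"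
        proof (intro allI iffI)
          fix z assume a: "A z p"
          show "z = x \<or> z = q"
          proof (rule ccontr)
            assume "\<not>(z = x \<or> z = q)"
            then show False using three[OF ink'[OF a] qk' pk'] Airr[OF a] qp by blast
          qed
        next
          fix z assume "z = x \<or> z = q" then show "A z p" using Asym[OF Apx] Aqp by blast
        qed
        have qV: "q \<in> V" using AV[OF Aqp(1)] .
        define k'' where "k'' = R q"
        have qk'': "inb q k''" unfolding k''_def using R_props(1)[OF qV] .
        have nqk: "\<not> inb q k" using three[OF xk pk] Aqp(2) qp xp by blast
        have c3: "inb r k''" if r: "A r q" "r \<noteq> p" "A z r" "z \<noteq> q" for r z
        proof -
          have rq: "r \<noteq> q" using Airr[OF r(1)] .
          have zr: "z \<noteq> r" using Airr[OF r(3)] .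
          have rx: "r \<noteq> x"
          proof
            assume "r = x" then have "A q x" using Asym[OF r(1)] by simp
            then show False using nx qp by simp
          qed
          have zp: "z \<noteq> p"
          proof
            assume "z = p" then have "A p r" using r(3) by simp
            then have "r = x \<or> r = q" using np Asym by blast
            then show False using rx rq by blast
          qed
          obtain j where j: "inb r j" "inb z j" using edge[OF r(3)[THEN Asym]] by blast
          obtain j2 where j2: "inb r j2" "inb q j2" using edge[OF r(1)] by blast
          have nqj: "\<not> inb q j" using three[OF j(1) j(2)] zr rq r(4) by blast
          have "\<not> j \<le> k"
          proof
            assume "j \<le> k"
            then have "inb r k" using upk j(1) by blast
            then show False using three[OF xk pk] xp rx r(2) by blast
          qed
          moreover have "\<not> (k < j \<and> j \<le> k')"
          proof
            assume "k < j \<and> j \<le> k'"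
            then have "inb p j" using conv[OF pk pk'] by simp
            then show False using three[OF _ j] r(2) zp zr by blast
          qed
          ultimately have jk': "k' < j" by linarith
          have "\<not> j < j2"
          proof
            assume "j < j2"
            then have "inb q j" using conv[OF qk' j2(2)] jk' by simp
            then show False using nqj by simp
          qed
          moreover have "j \<noteq> j2" using nqj j2(2) by blast
          ultimately have "j2 < j" by simp
          have "j2 \<le> k''" unfolding k''_def using R_props(2)[OF qV j2(2)] .
          moreover have "\<not> j \<le> k''"
          proof
            assume "j \<le> k''"
            then have "inb q j" using conv[OF j2(2) qk''] \<open>j2 < j\<close> by simp
            then show False using nqj by simp
          qed
          ultimately show ?thesis using conv[OF j2(1) j(1)] \<open>j2 < j\<close> by simp
        qed
        have "cfg3 V A x p q"
        proof (unfold_locales)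
          show "wfg V A" by (rule w)
          show "\<forall>z. A z x \<longleftrightarrow> z = p" by (rule nx)
          show "\<forall>z. A z p \<longleftrightarrow> z = x \<or> z = q" by (rule np)
          show "q \<noteq> x" by (rule Aqp(2))
          fix r1 r2 assume h: "A r1 q" "A r2 q" "r1 \<noteq> p" "r2 \<noteq> p"
            "\<exists>z. A z r1 \<and> z \<noteq> q" "\<exists>z. A z r2 \<and> z \<noteq> q"
          obtain z1 where "A z1 r1" "z1 \<noteq> q" using h(5) by blast
          then have 1: "inb r1 k''" using c3 h(1,3) by blast
          obtain z2 where "A z2 r2" "z2 \<noteq> q" using h(6) by blast
          then have 2: "inb r2 k''" using c3 h(2,4) by blast
          show "r1 = r2" using three[OF 1 2 qk''] Airr[OF h(1)] Airr[OF h(2)] by blast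
        qed
        then show ?thesis by blast
      qed
    qed
  qed
qed

end

lemma alpha_facts:
  fixes \<alpha> :: real
  assumes "\<alpha> ^ 3 - \<alpha> ^ 2 - 1 = 0" and "1 < \<alpha>" and "\<alpha> < 2"
  shows "\<And>m. \<alpha> ^ (m + 3) = \<alpha> ^ (m + 2) + \<alpha> ^ m" "2 \<le> \<alpha> ^ 2"
proof -
  have e: "\<alpha> ^ 3 = \<alpha> ^ 2 + 1" using assms(1) by simp
  show "\<alpha> ^ (m + 3) = \<alpha> ^ (m + 2) + \<alpha> ^ m" for m
  proof -
    have "\<alpha> ^ (m + 3) = \<alpha> ^ m * \<alpha> ^ 3" by (simp add: power_add)
    also have "\<dots> = \<alpha> ^ m * \<alpha> ^ 2 + \<alpha> ^ m" by (simp add: e distrib_left)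
    also have "\<dots> = \<alpha> ^ (m + 2) + \<alpha> ^ m" by (simp only: power_add)
    finally show ?thesis .
  qed
  show "2 \<le> \<alpha> ^ 2"
  proof (rule ccontr)
    assume "\<not> 2 \<le> \<alpha> ^ 2"
    then have a2: "\<alpha> ^ 2 < 2" by simp
    have "\<alpha> < 3/2"
    proof (rule ccontr)
      assume "\<not> \<alpha> < 3/2"
      then have "3/2 \<le> \<alpha>" by simp
      then have "(3/2)^2 \<le> \<alpha>^2" by (rule power_mono) simp
      moreover have "(3/2::real)^2 = 9/4" by (simp add: power2_eq_square)
      ultimately show False using a2 by linarith
    qed
    then have "\<alpha> - 1 < 1/2" by simp
    have "\<alpha> ^ 3 - \<alpha> ^ 2 = \<alpha> ^ 2 * (\<alpha> - 1)" by (simp add: algebra_simps power3_eq_cube power2_eq_square)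
    also have "\<dots> < 2 * (1/2)"
      using a2 \<open>\<alpha> - 1 < 1/2\<close> assms(2) by (intro mult_strict_mono) auto
    finally show False using e by simp
  qed
qed

lemma cnt_empty: "cnt {} A = 1"
proof -
  have "{D. good {} A D} = {{}}"
  proof (rule set_eqI)
    fix D show "D \<in> {D. good {} A D} \<longleftrightarrow> D \<in> {{}}"
    proof
      assume "D \<in> {D. good {} A D}" then show "D \<in> {{}}" using goodD by blast
    next
      assume "D \<in> {{}}" then have "D = {}" by simp
      show "D \<in> {D. good {} A D}" unfolding \<open>D = {}\<close> by (simp add: good_def)
    qed
  qed
  then show ?thesis by simp
qed

lemma count_le:
  fixes \<alpha> :: real
  assumes al: "\<alpha> ^ 3 - \<alpha> ^ 2 - 1 = 0" "1 < \<alpha>" "\<alpha> < 2"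
  shows "wfg V A \<Longrightarrow> pdec V A bs \<Longrightarrow> real (cnt V A) \<le> \<alpha> ^ card V"
proof (induction "card V" arbitrary: V A bs rule: less_induct)
  case less
  have finV: "finite V" using less.prems(1) unfolding wfg_def by simp
  have IH: "real (cnt (V - S) (del A S)) \<le> \<alpha> ^ (card V - card S)" if S: "S \<subseteq> V" "S \<noteq> {}" for S
  proof -
    have fS: "finite S" using finV S(1) finite_subset by blast
    have cs: "card (V - S) = card V - card S" using card_Diff_subset[OF fS S(1)] .
    have "card S > 0" using fS S(2) by (simp add: card_gt_0_iff)
    moreover have "card S \<le> card V" using card_mono[OF finV S(1)] .
    ultimately have "card (V - S) < card V" using cs by linarith
    then have "real (cnt (V - S) (del A S)) \<le> \<alpha> ^ card (V - S)"
      using less.hyps[of "V - S" "del A S" "map (\<lambda>B. B - S) bs"]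
        wfg_del[OF less.prems(1)] pdec_del[OF less.prems(2) finV] by blast
    then show ?thesis using cs by simp
  qed
  have a1: "1 \<le> \<alpha>" using al by simp
  have mono: "\<alpha> ^ i \<le> \<alpha> ^ j" if "i \<le> j" for i j using power_increasing[OF that a1] .
  have af: "\<alpha> ^ (m + 3) = \<alpha> ^ (m + 2) + \<alpha> ^ m" "2 \<le> \<alpha> ^ 2" for m
    using alpha_facts[OF al] by blast+
  show ?case
  proof (cases "V = {}")
    case True then show ?thesis using cnt_empty[of A] by simp
  next
    case False
    have wf: "wfg V A" and pd: "pdec V A bs" using less.prems by auto
    have AV: "A u v \<Longrightarrow> u \<in> V \<and> v \<in> V \<and> u \<noteq> v" for u v using wf unfolding wfg_def by blast
    note cf = config[OF wf pd False]
    show ?thesis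
    proof -
      { assume "\<exists>x\<in>V. \<forall>z. \<not> A z x"
        then obtain x where x: "x \<in> V" "\<forall>z. \<not> A z x" by blast
        have "real (cnt V A) \<le> real (cnt (V - {x}) (del A {x}))" using red0[OF wf x] by simp
        also have "\<dots> \<le> \<alpha> ^ (card V - 1)" using IH[of "{x}"] x by simp
        also have "\<dots> \<le> \<alpha> ^ card V" by (rule mono) simp
        finally have ?thesis . }
      moreover
      { assume "\<exists>x p. (\<forall>z. A z x \<longleftrightarrow> z = p) \<and> (\<forall>z. A z p \<longleftrightarrow> z = x)"
        then obtain x p where h: "\<forall>z. A z x \<longleftrightarrow> z = p" "\<forall>z. A z p \<longleftrightarrow> z = x" by blast
        have xp: "x \<in> V" "p \<in> V" "x \<noteq> p" using AV[of p x] h by auto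
        have c2: "card {x,p} = 2" using xp by simp
        have n2: "2 \<le> card V" using card_mono[OF finV, of "{x,p}"] xp c2 by simp
        have "real (cnt V A) \<le> 2 * real (cnt (V - {x,p}) (del A {x,p}))" using red1[OF wf h] by simp
        also have "\<dots> \<le> 2 * \<alpha> ^ (card V - 2)" using IH[of "{x,p}"] xp c2 by simp
        also have "\<dots> \<le> \<alpha> ^ 2 * \<alpha> ^ (card V - 2)" using af(2) a1 by (intro mult_right_mono) simp_all
        also have "\<dots> = \<alpha> ^ (2 + (card V - 2))" by (simp only: power_add)
        also have "\<dots> = \<alpha> ^ card V" by (simp only: le_add_diff_inverse[OF n2])
        finally have ?thesis . }
      moreover
      { assume "\<exists>x x2 p. x \<noteq> x2 \<and> (\<forall>z. A z x \<longleftrightarrow> z = p) \<and> (\<forall>z. A z x2 \<longleftrightarrow> z = p)"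
        then obtain x x2 p where h: "x \<noteq> x2" "\<forall>z. A z x \<longleftrightarrow> z = p" "\<forall>z. A z x2 \<longleftrightarrow> z = p" by blast
        have x2: "x2 \<in> V" using AV[of p x2] h by auto
        have "real (cnt V A) \<le> real (cnt (V - {x2}) (del A {x2}))" using red2[OF wf h(2) h(3) h(1)] by simp
        also have "\<dots> \<le> \<alpha> ^ (card V - 1)" using IH[of "{x2}"] x2 by simp
        also have "\<dots> \<le> \<alpha> ^ card V" by (rule mono) simp
        finally have ?thesis . }
      moreover
      { assume "\<exists>x p q. cfg3 V A x p q"
        then obtain x p q where c: "cfg3 V A x p q" by blast
        interpret cfg3 V A x p q by (rule c)
        have d: "x \<noteq> p" "p \<noteq> q" "q \<noteq> x" using basic qx by auto
        have c3: "card {x,p,q} = 3" using d by simp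
        have n3: "3 \<le> card V" using card_mono[OF finV, of "{x,p,q}"] basic c3 by simp
        have "real (cnt V A) \<le> real (cnt (V - {x}) (del A {x})) + real (cnt (V - {x,p,q}) (del A {x,p,q}))"
          using red3 by (simp flip: of_nat_add)
        also have "\<dots> \<le> \<alpha> ^ (card V - 1) + \<alpha> ^ (card V - 3)"
          using IH[of "{x}"] IH[of "{x,p,q}"] basic c3 by (intro add_mono) auto
        also have "\<dots> = \<alpha> ^ card V"
        proof -
          obtain m where m: "card V = m + 3" using n3 by (metis add.commute le_Suc_ex)
          show ?thesis using af(1)[of m] unfolding m by (simp add: numeral_3_eq_3 numeral_2_eq_2)
        qed
        finally have ?thesis . }
      ultimately show ?thesis using cf by blast
    qed
  qed
qed

lemma sg_wfg: assumes sg: "simple_graph V E" shows "wfg V (adj E)"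
  unfolding wfg_def
proof (rule conjI; (intro allI impI)?)
  show "finite V" using sg by (simp add: simple_graph_def)
  fix u v assume a: "adj E u v"
  show "u \<in> V \<and> v \<in> V \<and> u \<noteq> v \<and> adj E v u" using sg_adj[OF sg a] adj_sym[of E u v] a by simp
qed

lemma pd_pdec:
  assumes "path_decomposition V E bs 1"
  shows "pdec V (adj E) bs"
proof -
  have a: "\<forall>B\<in>set bs. B \<subseteq> V \<and> card B \<le> 2" "V \<subseteq> \<Union>(set bs)" "\<forall>e\<in>E. \<exists>B\<in>set bs. e \<subseteq> B"
    "\<forall>v i j l. i \<le> j \<and> j \<le> l \<and> l < length bs \<and> v \<in> bs!i \<and> v \<in> bs!l \<longrightarrow> v \<in> bs!j"
  proof -
    have b: "(\<forall>B\<in>set bs. B \<subseteq> V \<and> card B \<le> 1 + 1) \<and> V \<subseteq> \<Union>(set bs) \<and> (\<forall>e\<in>E. \<exists>B\<in>set bs. e \<subseteq> B) \<and>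
     (\<forall>v i j l. i \<le> j \<and> j \<le> l \<and> l < length bs \<and> v \<in> bs ! i \<and> v \<in> bs ! l \<longrightarrow> v \<in> bs ! j)"
      using assms unfolding path_decomposition_def .
    show "\<forall>B\<in>set bs. B \<subseteq> V \<and> card B \<le> 2" using conjunct1[OF b] by (simp add: numeral_2_eq_2)
    show "V \<subseteq> \<Union>(set bs)" using conjunct1[OF conjunct2[OF b]] .
    show "\<forall>e\<in>E. \<exists>B\<in>set bs. e \<subseteq> B" using conjunct1[OF conjunct2[OF conjunct2[OF b]]] .
    show "\<forall>v i j l. i \<le> j \<and> j \<le> l \<and> l < length bs \<and> v \<in> bs!i \<and> v \<in> bs!l \<longrightarrow> v \<in> bs!j"
      using conjunct2[OF conjunct2[OF conjunct2[OF b]]] .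
  qed
  have e: "\<forall>u v. adj E u v \<longrightarrow> (\<exists>i<length bs. u \<in> bs!i \<and> v \<in> bs!i)"
  proof (intro allI impI)
    fix u v assume "adj E u v"
    then have "{u,v} \<in> E" by (simp add: adj_def)
    then obtain B where B: "B \<in> set bs" "{u,v} \<subseteq> B" using a(3) by blast
    then obtain i where "i < length bs" "bs!i = B" by (meson in_set_conv_nth)
    then show "\<exists>i<length bs. u \<in> bs!i \<and> v \<in> bs!i" using B(2) by auto
  qed
  show ?thesis unfolding pdec_def by (intro conjI a(1) a(2) a(4) e)
qed

lemma om_eq: "simple_graph V E \<Longrightarrow> {D. one_minimal_pds V E D} = {D. good V (adj E) D}"
  using one_min_iff by blast

lemma part1:
  fixes \<alpha> :: real
  assumes al: "\<alpha> ^ 3 - \<alpha> ^ 2 - 1 = 0" "1 < \<alpha>" "\<alpha> < 2"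
  shows "\<forall>(V :: 'a set) E. simple_graph V E \<and> pathwidth_at_most V E 1 \<longrightarrow>
            real (card {D. one_minimal_pds V E D}) \<le> \<alpha> ^ card V"
proof (intro allI impI)
  fix V :: "'a set" and E assume h: "simple_graph V E \<and> pathwidth_at_most V E 1"
  then obtain bs where "path_decomposition V E bs 1" unfolding pathwidth_at_most_def by blast
  then have "pdec V (adj E) bs" by (rule pd_pdec)
  moreover have sg: "simple_graph V E" using h by simp
  ultimately show "real (card {D. one_minimal_pds V E D}) \<le> \<alpha> ^ card V"
    using count_le[OF al sg_wfg[OF sg]] om_eq[OF sg] by simp
qed

locale cfgL = cfg +
  fixes r s t
  assumes nq: "\<forall>z. A z q \<longleftrightarrow> z = p \<or> z = r" and nr: "\<forall>z. A z r \<longleftrightarrow> z = q \<or> z = s"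
    and rp: "r \<noteq> p" and sq: "s \<noteq> q" and ts: "A t s" and tr: "t \<noteq> r"
begin

lemma symA': "A u v \<Longrightarrow> A v u" using wfgD[OF w] by blast

lemma nbq: "A q z \<longleftrightarrow> z = p \<or> z = r" using nq symA' by blast
lemma nbr: "A r z \<longleftrightarrow> z = q \<or> z = s" using nr symA' by blast

lemma facts: "r \<noteq> x" "r \<noteq> q" "s \<noteq> x" "s \<noteq> p" "s \<noteq> r" "r \<in> V" "s \<in> V"
  "A r q" "A s r" "A q r" "A r s"
proof -
  show 1: "A r q" "A s r" using nq nr by auto
  show "A q r" "A r s" using symA'[OF 1(1)] symA'[OF 1(2)] .
  show "r \<noteq> x" using nbx 1(1) basic(6) by (metis)
  show "r \<noteq> q" using wfgD[OF w 1(1)] by blast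
  show "s \<noteq> r" using wfgD[OF w 1(2)] by blast
  show "r \<in> V" "s \<in> V" using wfgD[OF w 1(1)] wfgD[OF w 1(2)] by auto
  show "s \<noteq> x"
  proof assume "s = x" then have "A x r" using 1(2) by simp
    then show False using nbx rp by simp qed
  show "s \<noteq> p"
  proof assume "s = p" then have "A p r" using 1(2) by simp
    then have "r = x \<or> r = q" using nbp by simp
    then show False using \<open>r \<noteq> q\<close> \<open>r \<noteq> x\<close> by blast qed
qed

definition gL where "gL D = (if p \<in> D then D else insert p D)"
definition hL where "hL D = (if r \<in> D then insert x D else insert x (insert r D))"

lemma gL_good:
  assumes g: "good (V - {x}) (del A {x}) D"
  shows "good V A (gL D)" "x \<notin> gL D"
proof -
  have DV: "D \<subseteq> V - {x}" using goodD[OF g] .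
  have xD: "x \<notin> D" using DV by auto
  have pV: "p \<in> V - {x}" using basic by auto
  have dpq: "del A {x} q p" using basic qx by (simp add: del_def)
  show "x \<notin> gL D" using xD basic(5) by (simp add: gL_def)
  show "good V A (gL D)"
  proof (cases "p \<in> D")
    case True
    have qD: "q \<notin> D"
    proof
      assume qD: "q \<in> D"
      have "del A {x} z p \<longleftrightarrow> z = q" for z using np qx basic(5) unfolding del_def by auto
      then show False using good_min[OF g True qD] by blast
    qed
    show ?thesis unfolding gL_def using True
    proof (simp only: if_True, intro goodI)
      show "D \<subseteq> V" using DV by auto
    next
      fix v assume v: "v \<in> V" "v \<notin> D"
      show "\<exists>!u. u \<in> D \<and> A u v"
      proof (cases "v = x")
        case True
        show ?thesis using \<open>p \<in> D\<close> nx True by (intro ex1I[of _ p]) auto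
      next
        case False
        then have v1: "v \<in> V - {x}" using v by simp
        obtain u where u: "u \<in> D" "del A {x} u v" "\<And>w. w\<in>D \<Longrightarrow> del A {x} w v \<Longrightarrow> w = u"
          using good_outE[OF g v1 v(2)] by blast
        show ?thesis
        proof (rule ex1I[of _ u])
          show "u \<in> D \<and> A u v" using u(1,2) by (simp add: del_def)
          fix w' assume "w' \<in> D \<and> A w' v"
          then have "w' \<in> D" "del A {x} w' v" using xD False by (auto simp: del_def)
          then show "w' = u" using u(3) by blast
        qed
      qed
    next
      fix y' y assume y': "y' \<in> D" and y: "y \<in> D" and yy: "\<forall>z. A z y' \<longleftrightarrow> z = y"
      show False
      proof (cases "y' = p")
        case True
        then have "x = y" "q = y" using yy basic by auto
        then show False using qx by simp
      next
        case False
        have yx: "y' \<noteq> x" "y \<noteq> x" using xD y y' by auto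
        have "del A {x} z y' \<longleftrightarrow> z = y" for z using yy yx unfolding del_def by auto
        then show False using good_min[OF g y' y] by blast
      qed
    qed
  next
    case False
    have qD: "q \<in> D"
    proof -
      obtain u where u: "u \<in> D" "del A {x} u p" using good_outE[OF g pV False] by blast
      then have "A u p" "u \<noteq> x" by (auto simp: del_def)
      then have "u = q" using np by blast
      then show ?thesis using u(1) by simp
    qed
    show ?thesis unfolding gL_def using False
    proof (simp only: if_False, intro goodI)
      show "insert p D \<subseteq> V" using DV basic by auto
    next
      fix v assume v: "v \<in> V" "v \<notin> insert p D"
      show "\<exists>!u. u \<in> insert p D \<and> A u v"
      proof (cases "v = x")
        case True
        show ?thesis using nx True by (intro ex1I[of _ p]) auto
      next
        case c: False
        then have v1: "v \<in> V - {x}" using v by simp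
        have vD: "v \<notin> D" "v \<noteq> p" using v by auto
        obtain u where u: "u \<in> D" "del A {x} u v" "\<And>w. w\<in>D \<Longrightarrow> del A {x} w v \<Longrightarrow> w = u"
          using good_outE[OF g v1 vD(1)] by blast
        have npv: "\<not> A p v" using nbp c vD qD by auto
        show ?thesis
        proof (rule ex1I[of _ u])
          show "u \<in> insert p D \<and> A u v" using u(1,2) by (simp add: del_def)
          fix w' assume a: "w' \<in> insert p D \<and> A w' v"
          then have "w' \<noteq> p" using npv by auto
          then have "w' \<in> D" "del A {x} w' v" using a xD c by (auto simp: del_def)
          then show "w' = u" using u(3) by blast
        qed
      qed
    next
      fix y' y assume y': "y' \<in> insert p D" and y: "y \<in> insert p D" and yy: "\<forall>z. A z y' \<longleftrightarrow> z = y"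
      show False
      proof (cases "y' = p")
        case True
        then have "x = y" "q = y" using yy basic by auto
        then show False using qx by simp
      next
        case c1: False
        show False
        proof (cases "y' = q")
          case True
          then have "p = y" "r = y" using yy basic facts by auto
          then show False using rp by simp
        next
          case c2: False
          have y'D: "y' \<in> D" using y' c1 by simp
          have "\<not> A p y'" using nbp c2 y'D xD by auto
          then have yp: "y \<noteq> p" using yy by auto
          then have yD: "y \<in> D" using y by simp
          have yx: "y' \<noteq> x" "y \<noteq> x" using xD y'D yD by auto
          have "del A {x} z y' \<longleftrightarrow> z = y" for z using yy yx unfolding del_def by auto
          then show False using good_min[OF g y'D yD] by blast
        qed
      qed
    qed
  qed
qed

lemma gL_inj: "inj_on gL {D. good (V - {x}) (del A {x}) D}"
proof (rule inj_on_inverseI[of _ "\<lambda>D. if q \<in> D then D - {p} else D"])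
  fix D assume "D \<in> {D. good (V - {x}) (del A {x}) D}"
  then have g: "good (V - {x}) (del A {x}) D" by simp
  have pV: "p \<in> V - {x}" using basic by auto
  show "(if q \<in> gL D then gL D - {p} else gL D) = D"
  proof (cases "p \<in> D")
    case True
    have qD: "q \<notin> D"
    proof
      assume qD: "q \<in> D"
      have "del A {x} z p \<longleftrightarrow> z = q" for z using np qx basic(5) unfolding del_def by auto
      then show False using good_min[OF g True qD] by blast
    qed
    then show ?thesis using True basic by (simp add: gL_def)
  next
    case False
    have qD: "q \<in> D"
    proof -
      obtain u where u: "u \<in> D" "del A {x} u p" using good_outE[OF g pV False] by blast
      then have "A u p" "u \<noteq> x" by (auto simp: del_def)
      then have "u = q" using np by blast
      then show ?thesis using u(1) by simp
    qed
    then show ?thesis using False by (auto simp: gL_def)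
  qed
qed

end

context cfgL begin

lemma notS: "y \<notin> {x,p,q} \<Longrightarrow> y \<noteq> r \<Longrightarrow> z \<in> {x,p,q} \<Longrightarrow> \<not> A z y"
  using nbx nbp nbq by auto

lemma hL_good:
  assumes g: "good (V - {x,p,q}) (del A {x,p,q}) D"
  shows "good V A (hL D)" "x \<in> hL D"
proof -
  let ?S = "{x,p,q}"
  have DV: "D \<subseteq> V - ?S" using goodD[OF g] .
  have xD: "x \<notin> D" "p \<notin> D" "q \<notin> D" using DV by auto
  have rV: "r \<in> V - ?S" using facts basic rp by auto
  have dist: "x \<noteq> p" "p \<noteq> q" "q \<noteq> x" "r \<noteq> x" "r \<noteq> q" "r \<noteq> p" "s \<noteq> x" "s \<noteq> p" "s \<noteq> q"
    using basic qx facts rp sq by auto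
  show "x \<in> hL D" by (simp add: hL_def)
  have outD: "\<exists>!u. u \<in> D' \<and> A u v"
    if v: "v \<in> V - ?S" "v \<notin> D" and D': "D' \<subseteq> insert x (insert r D)" "D \<subseteq> D'"
      and rv: "r \<in> D' \<Longrightarrow> r \<notin> D \<Longrightarrow> \<not> A r v" for v D'
  proof -
    obtain u where u: "u \<in> D" "del A ?S u v" "\<And>w. w\<in>D \<Longrightarrow> del A ?S w v \<Longrightarrow> w = u"
      using good_outE[OF g v(1) v(2)] by blast
    have nxv: "\<not> A x v" using nbx v(1) by auto
    show ?thesis
    proof (rule ex1I[of _ u])
      show "u \<in> D' \<and> A u v" using u(1,2) D'(2) by (auto simp: del_def)
      fix w' assume a: "w' \<in> D' \<and> A w' v"
      then have "w' \<noteq> x" "w' = r \<Longrightarrow> r \<in> D" using nxv rv by auto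
      then have "w' \<in> D" using a D'(1) by auto
      moreover have "w' \<notin> ?S" using calculation DV by auto
      ultimately have "del A ?S w' v" using a v(1) by (simp add: del_def)
      then show "w' = u" using u(3) \<open>w' \<in> D\<close> by blast
    qed
  qed
  have minD: False if y': "y' \<in> D" "y' \<noteq> r" and y: "y \<in> D'" and D': "D' \<subseteq> insert x (insert r D)"
    and ry: "r \<in> D' \<Longrightarrow> \<not> A r y'" and yy: "\<forall>z. A z y' \<longleftrightarrow> z = y" for y' y D'
  proof -
    have y'S: "y' \<notin> ?S" using y' DV by auto
    have Ay: "A y y'" using yy by simp
    have "y \<noteq> x" using Ay nbx y'S by auto
    moreover have "y \<noteq> r \<or> r \<notin> D'" using Ay ry by auto
    ultimately have yD: "y \<in> D" using y D' by auto
    then have yS: "y \<notin> ?S" using DV by auto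
    have "del A ?S z y' \<longleftrightarrow> z = y" for z
    proof (cases "z \<in> ?S")
      case True
      then have "\<not> A z y'" using notS y'S y'(2) by blast
      then show ?thesis using True yS by (auto simp: del_def)
    next
      case False then show ?thesis using yy y'S by (simp add: del_def)
    qed
    then show False using good_min[OF g y'(1) yD] by blast
  qed
  show "good V A (hL D)"
  proof (cases "r \<in> D")
    case True
    have e: "hL D = insert x D" using True by (simp add: hL_def)
    have sD': "s \<notin> D"
    proof
      assume sD: "s \<in> D"
      have "del A ?S z r \<longleftrightarrow> z = s" for z using nr dist unfolding del_def by auto
      then show False using good_min[OF g True sD] by blast
    qed
    show ?thesis unfolding e
    proof (rule goodI)
      show "insert x D \<subseteq> V" using DV basic by auto
    next
      fix v assume v: "v \<in> V" "v \<notin> insert x D"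
      show "\<exists>!u. u \<in> insert x D \<and> A u v"
      proof (cases "v = p")
        case True
        show ?thesis
        proof (rule ex1I[of _ x])
          show "x \<in> insert x D \<and> A x v" using True basic by simp
          fix w' assume "w' \<in> insert x D \<and> A w' v"
          then show "w' = x" using True np xD by auto
        qed
      next
        case c1: False
        show ?thesis
        proof (cases "v = q")
          case True
          show ?thesis
          proof (rule ex1I[of _ r])
            show "r \<in> insert x D \<and> A r v" using True \<open>r \<in> D\<close> facts by simp
            fix w' assume "w' \<in> insert x D \<and> A w' v"
            then show "w' = r" using True nq xD dist by auto
          qed
        next
          case False
          then have v1: "v \<in> V - ?S" "v \<notin> D" using v c1 by auto
          show ?thesis
          proof (rule outD[OF v1])
            show "insert x D \<subseteq> insert x (insert r D)" by auto
            show "D \<subseteq> insert x D" by auto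
            show "\<not> A r v" if "r \<notin> D" using that True by simp
          qed
        qed
      qed
    next
      fix y' y assume y': "y' \<in> insert x D" and y: "y \<in> insert x D" and yy: "\<forall>z. A z y' \<longleftrightarrow> z = y"
      show False
      proof (cases "y' = x")
        case True
        then have "y = p" using yy basic by auto
        then show False using y xD dist by auto
      next
        case c1: False
        show False
        proof (cases "y' = r")
          case True
          then have "y = q" "y = s" using yy facts by auto
          then show False using sq by simp
        next
          case False
          have y'D: "y' \<in> D" using y' c1 by simp
          have "\<not> A r y'" using nbr y'D xD sD' by auto
          have "insert x D \<subseteq> insert x (insert r D)" by auto
          then show False using minD[OF y'D False y _ _ yy] \<open>\<not> A r y'\<close> by blast
        qed
      qed
    qed
  next
    case False
    have sD: "s \<in> D"
    proof -
      obtain u where u: "u \<in> D" "del A ?S u r" using good_outE[OF g rV False] by blast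
      then have "A u r" "u \<noteq> q" by (auto simp: del_def)
      then have "u = s" using nr by blast
      then show ?thesis using u(1) by simp
    qed
    have e: "hL D = insert x (insert r D)" using False by (simp add: hL_def)
    show ?thesis unfolding e
    proof (rule goodI)
      show "insert x (insert r D) \<subseteq> V" using DV basic facts by auto
    next
      fix v assume v: "v \<in> V" "v \<notin> insert x (insert r D)"
      show "\<exists>!u. u \<in> insert x (insert r D) \<and> A u v"
      proof (cases "v = p")
        case True
        show ?thesis
        proof (rule ex1I[of _ x])
          show "x \<in> insert x (insert r D) \<and> A x v" using True basic by simp
          fix w' assume "w' \<in> insert x (insert r D) \<and> A w' v"
          then show "w' = x" using True np xD dist by auto
        qed
      next
        case c1: False
        show ?thesis
        proof (cases "v = q")
          case True
          show ?thesis
          proof (rule ex1I[of _ r])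
            show "r \<in> insert x (insert r D) \<and> A r v" using True facts by simp
            fix w' assume "w' \<in> insert x (insert r D) \<and> A w' v"
            then show "w' = r" using True nq xD dist by auto
          qed
        next
          case c2: False
          then have v1: "v \<in> V - ?S" "v \<notin> D" using v c1 by auto
          have vs: "v \<noteq> s" using v sD by auto
          show ?thesis
          proof (rule outD[OF v1])
            show "insert x (insert r D) \<subseteq> insert x (insert r D)" by auto
            show "D \<subseteq> insert x (insert r D)" by auto
            show "\<not> A r v" using nbr c2 vs by auto
          qed
        qed
      qed
    next
      fix y' y assume y': "y' \<in> insert x (insert r D)" and y: "y \<in> insert x (insert r D)"
        and yy: "\<forall>z. A z y' \<longleftrightarrow> z = y"
      show False
      proof (cases "y' = x")
        case True
        then have "y = p" using yy basic by auto
        then show False using y xD dist by auto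
      next
        case c1: False
        show False
        proof (cases "y' = r")
          case True
          then have "y = q" "y = s" using yy facts by auto
          then show False using sq by simp
        next
          case c2: False
          have y'D: "y' \<in> D" using y' c1 c2 by simp
          show False
          proof (cases "y' = s")
            case True
            then have "y = r" "y = t" using yy facts ts by auto
            then show False using tr by simp
          next
            case False
            have "\<not> A r y'" using nbr y'D xD False by auto
            then show False using minD[OF y'D c2 y _ _ yy] by blast
          qed
        qed
      qed
    qed
  qed
qed

end

context cfgL begin

lemma hL_inj: "inj_on hL {D. good (V - {x,p,q}) (del A {x,p,q}) D}"
proof (rule inj_on_inverseI[of _ "\<lambda>D. if s \<in> D then D - {x, r} else D - {x}"])
  let ?S = "{x,p,q}"
  fix D assume "D \<in> {D. good (V - ?S) (del A ?S) D}"
  then have g: "good (V - ?S) (del A ?S) D" by simp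
  have DV: "D \<subseteq> V - ?S" using goodD[OF g] .
  have xD: "x \<notin> D" using DV by auto
  have rV: "r \<in> V - ?S" using facts basic rp by auto
  have dist: "x \<noteq> p" "p \<noteq> q" "q \<noteq> x" "r \<noteq> x" "r \<noteq> q" "r \<noteq> p" "s \<noteq> x" "s \<noteq> p" "s \<noteq> q"
    using basic qx facts rp sq by auto
  show "(if s \<in> hL D then hL D - {x, r} else hL D - {x}) = D"
  proof (cases "r \<in> D")
    case True
    have sD': "s \<notin> D"
    proof
      assume sD: "s \<in> D"
      have "del A ?S z r \<longleftrightarrow> z = s" for z using nr dist unfolding del_def by auto
      then show False using good_min[OF g True sD] by blast
    qed
    then show ?thesis using True xD dist by (auto simp: hL_def)
  next
    case False
    have sD: "s \<in> D"
    proof -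
      obtain u where u: "u \<in> D" "del A ?S u r" using good_outE[OF g rV False] by blast
      then have "A u r" "u \<noteq> q" by (auto simp: del_def)
      then have "u = s" using nr by blast
      then show ?thesis using u(1) by simp
    qed
    then show ?thesis using False xD dist by (auto simp: hL_def)
  qed
qed

lemma lower: "cnt (V - {x}) (del A {x}) + cnt (V - {x,p,q}) (del A {x,p,q}) \<le> cnt V A"
proof -
  let ?G1 = "{D. good (V - {x}) (del A {x}) D}" and ?G3 = "{D. good (V - {x,p,q}) (del A {x,p,q}) D}"
  have fin: "finite V" using w by (simp add: wfg_def)
  have 1: "card (gL ` ?G1) = card ?G1" using card_image[OF gL_inj] .
  have 3: "card (hL ` ?G3) = card ?G3" using card_image[OF hL_inj] .
  have d: "gL ` ?G1 \<inter> hL ` ?G3 = {}" using gL_good(2) hL_good(2) by blast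
  have f1: "finite (gL ` ?G1)" using fin fin_good by blast
  have f3: "finite (hL ` ?G3)" using fin fin_good by blast
  have sub: "gL ` ?G1 \<union> hL ` ?G3 \<subseteq> {D. good V A D}" using gL_good(1) hL_good(1) by blast
  have "card ?G1 + card ?G3 = card (gL ` ?G1 \<union> hL ` ?G3)"
    using card_Un_disjoint[OF f1 f3 d] 1 3 by simp
  also have "\<dots> \<le> cnt V A" using card_mono[OF fin_good[OF fin] sub] .
  finally show ?thesis .
qed

end

lemma padj: "adj (path_E n) u v \<longleftrightarrow> (v = Suc u \<or> u = Suc v) \<and> u < n \<and> v < n"
proof -
  have "adj (path_E n) u v \<longleftrightarrow> (\<exists>i. {u,v} = {i, Suc i} \<and> Suc i < n)"
    unfolding adj_def path_E_def by blast
  also have "\<dots> \<longleftrightarrow> (v = Suc u \<or> u = Suc v) \<and> u < n \<and> v < n"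
    by (auto simp: doubleton_eq_iff)
  finally show ?thesis .
qed

lemma sg_path: "simple_graph (path_V n) (path_E n)"
  unfolding simple_graph_def path_V_def path_E_def by auto

lemma pw_path: "pathwidth_at_most (path_V n) (path_E n) 1"
proof -
  define bs where "bs = map (\<lambda>i. {i, Suc i} \<inter> {0..<n}) [0..<n]"
  have len: "length bs = n" by (simp add: bs_def)
  have nth: "i < n \<Longrightarrow> bs ! i = {i, Suc i} \<inter> {0..<n}" for i by (simp add: bs_def)
  have 1: "\<forall>B\<in>set bs. B \<subseteq> path_V n \<and> card B \<le> 1 + 1"
  proof
    fix B assume "B \<in> set bs"
    then obtain i where "B = {i, Suc i} \<inter> {0..<n}" by (auto simp: bs_def)
    moreover have "card ({i, Suc i} \<inter> {0..<n}) \<le> card {i, Suc i}" by (rule card_mono) auto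
    ultimately show "B \<subseteq> path_V n \<and> card B \<le> 1 + 1" by (auto simp: path_V_def)
  qed
  have 2: "path_V n \<subseteq> \<Union>(set bs)"
  proof
    fix v assume "v \<in> path_V n"
    then have "v < n" by (simp add: path_V_def)
    have "bs ! v \<in> set bs" using nth_mem[of v bs] len \<open>v < n\<close> by simp
    moreover have "v \<in> bs ! v" using nth \<open>v < n\<close> by simp
    ultimately show "v \<in> \<Union>(set bs)" by blast
  qed
  have 3: "\<forall>e\<in>path_E n. \<exists>B\<in>set bs. e \<subseteq> B"
  proof
    fix e assume "e \<in> path_E n"
    then obtain i where e: "e = {i, Suc i}" "Suc i < n" by (auto simp: path_E_def)
    have "bs ! i \<in> set bs" using nth_mem[of i bs] len e(2) by simp
    moreover have "e \<subseteq> bs ! i" using nth e by simp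
    ultimately show "\<exists>B\<in>set bs. e \<subseteq> B" by blast
  qed
  have 4: "\<forall>v i j l. i \<le> j \<and> j \<le> l \<and> l < length bs \<and> v \<in> bs ! i \<and> v \<in> bs ! l \<longrightarrow> v \<in> bs ! j"
  proof (intro allI impI)
    fix v i j l assume h: "i \<le> j \<and> j \<le> l \<and> l < length bs \<and> v \<in> bs ! i \<and> v \<in> bs ! l"
    then have "i < n" "j < n" "l < n" using len by auto
    then have "(v = i \<or> v = Suc i) \<and> v < n" "v = l \<or> v = Suc l" using h nth by auto
    then have "v = j \<or> v = Suc j" "v < n" using h by auto
    then show "v \<in> bs ! j" using nth \<open>j < n\<close> by auto
  qed
  show ?thesis unfolding pathwidth_at_most_def path_decomposition_def using 1 2 3 4 by blast
qed

definition pa :: "nat \<Rightarrow> nat" where "pa n = card {D. one_minimal_pds (path_V n) (path_E n) D}"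

lemma pa_cnt: "pa n = cnt {0..<n} (adj (path_E n))"
  unfolding pa_def using om_eq[OF sg_path] by (simp add: path_V_def)

lemma pa_rec:
  assumes n: "3 \<le> n"
  shows "pa (n + 2) + pa n \<le> pa (n + 3)"
proof -
  let ?A = "adj (path_E (n + 3))"
  have w: "wfg {0..<n+3} ?A" using sg_wfg[OF sg_path] by (simp add: path_V_def)
  interpret cfgL "{0..<n+3}" ?A "n+2" "n+1" n "n - 1" "n - 2" "n - 3"
  proof (unfold_locales)
    show "wfg {0..<n+3} ?A" by (rule w)
  qed (use n in \<open>auto simp: padj\<close>)
  have e1: "{0..<n+3} - {n+2} = {0..<n+2}" by auto
  have e3: "{0..<n+3} - {n+2, n+1, n} = {0..<n}" by auto
  have d1: "del ?A {n+2} = adj (path_E (n+2))"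
    by (intro ext) (auto simp: del_def padj)
  have d3: "del ?A {n+2, n+1, n} = adj (path_E n)"
    by (intro ext) (auto simp: del_def padj)
  show ?thesis using lower unfolding pa_cnt e1 e3 d1 d3 by simp
qed

lemma good_test: "good {0..<n} (adj (path_E n)) D \<longleftrightarrow>
   D \<subseteq> {0..<n} \<and> (\<forall>v\<in>{0..<n}-D. \<exists>!u. u\<in>D \<and> adj (path_E n) u v) \<and>
     (\<forall>x\<in>D. \<not>(\<exists>y\<in>D. \<forall>z. adj (path_E n) z x \<longleftrightarrow> z = y))"
  by (simp add: good_def)


lemma pa_pos: "good {0..<n} (adj (path_E n)) D \<Longrightarrow> 1 \<le> pa n"
  unfolding pa_cnt using fin_good[of "{0..<n}" "adj (path_E n)"]
  by (metis One_nat_def Suc_leI card_gt_0_iff empty_iff finite_atLeastLessThan mem_Collect_eq)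

lemma good_small:
  assumes "D \<subseteq> V" "\<forall>a\<in>D. \<forall>b\<in>D. \<not> A a b"
    "\<forall>v\<in>V-D. \<exists>u\<in>D. A u v \<and> (\<forall>w\<in>D. A w v \<longrightarrow> w = u)"
  shows "good V A D"
proof (rule goodI)
  show "D \<subseteq> V" by (rule assms(1))
next
  fix v assume "v \<in> V" "v \<notin> D"
  then obtain u where "u \<in> D" "A u v" "\<forall>w\<in>D. A w v \<longrightarrow> w = u" using assms(3) by blast
  then show "\<exists>!u. u \<in> D \<and> A u v" by blast
next
  fix x y assume "x \<in> D" "y \<in> D" "\<forall>z. A z x \<longleftrightarrow> z = y"
  then show False using assms(2) by blast
qed

lemma pa3: "1 \<le> pa 3"
proof (rule pa_pos[of _ "{1}"])
  have e: "{0..<3::nat} = {0,1,2}" by auto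
  show "good {0..<3} (adj (path_E 3)) {1}" unfolding e by (rule good_small) (auto simp: padj)
qed

lemma pa4: "1 \<le> pa 4"
proof (rule pa_pos[of _ "{0,3}"])
  have e: "{0..<4::nat} = {0,1,2,3}" by auto
  show "good {0..<4} (adj (path_E 4)) {0,3}" unfolding e by (rule good_small) (auto simp: padj)
qed

lemma pa5: "1 \<le> pa 5"
proof (rule pa_pos[of _ "{0,3}"])
  have e: "{0..<5::nat} = {0,1,2,3,4}" by auto
  show "good {0..<5} (adj (path_E 5)) {0,3}" unfolding e by (rule good_small) (auto simp: padj)
qed

lemma pa_lower:
  fixes \<alpha> :: real
  assumes al: "\<alpha> ^ 3 - \<alpha> ^ 2 - 1 = 0" "1 < \<alpha>" "\<alpha> < 2"
  shows "3 \<le> m \<Longrightarrow> \<alpha> ^ m / \<alpha> ^ 5 \<le> real (pa m)"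
proof (induction m rule: less_induct)
  case (less m)
  have a0: "0 < \<alpha>" using al by simp
  have a5: "0 < \<alpha> ^ 5" using a0 by simp
  show ?case
  proof (cases "m \<le> 5")
    case True
    then have "m = 3 \<or> m = 4 \<or> m = 5" using less.prems by auto
    then have p1: "1 \<le> real (pa m)" using pa3 pa4 pa5 by auto
    have "\<alpha> ^ m \<le> \<alpha> ^ 5" using True al by (intro power_increasing) auto
    then have "\<alpha> ^ m / \<alpha> ^ 5 \<le> 1" using a5 by simp
    then show ?thesis using p1 by linarith
  next
    case False
    define n where "n = m - 3"
    have m: "m = n + 3" and n: "3 \<le> n" using False unfolding n_def by auto
    have IH1: "\<alpha> ^ (n + 2) / \<alpha> ^ 5 \<le> real (pa (n + 2))" using less.IH[of "n + 2"] m n by simp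
    have IH2: "\<alpha> ^ n / \<alpha> ^ 5 \<le> real (pa n)" using less.IH[of n] m n by simp
    have rec: "real (pa (n + 2)) + real (pa n) \<le> real (pa (n + 3))" using pa_rec[OF n] by linarith
    have "\<alpha> ^ (n + 3) = \<alpha> ^ (n + 2) + \<alpha> ^ n" using alpha_facts(1)[OF al] by blast
    then have "\<alpha> ^ m / \<alpha> ^ 5 = \<alpha> ^ (n + 2) / \<alpha> ^ 5 + \<alpha> ^ n / \<alpha> ^ 5" unfolding m by (simp add: add_divide_distrib)
    then show ?thesis using IH1 IH2 rec unfolding m by linarith
  qed
qed

theorem mainTheorem8:
  fixes \<alpha> :: real
  assumes "\<alpha> ^ 3 - \<alpha> ^ 2 - 1 = 0" and "1 < \<alpha>" and "\<alpha> < 2"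
  shows "(\<forall>(V :: 'a set) E. simple_graph V E \<and> pathwidth_at_most V E 1 \<longrightarrow>
            real (card {D. one_minimal_pds V E D}) \<le> \<alpha> ^ card V)
       \<and> (\<lambda>n. real (card {D. one_minimal_pds (path_V n) (path_E n) D})) \<in> \<Theta>(\<lambda>n. \<alpha> ^ n)"
proof
  show "\<forall>(V :: 'a set) E. simple_graph V E \<and> pathwidth_at_most V E 1 \<longrightarrow>
            real (card {D. one_minimal_pds V E D}) \<le> \<alpha> ^ card V" by (rule part1[OF assms])
  have P: "\<forall>(V :: nat set) E. simple_graph V E \<and> pathwidth_at_most V E 1 \<longrightarrow>
            real (card {D. one_minimal_pds V E D}) \<le> \<alpha> ^ card V" by (rule part1[OF assms])
  have up: "real (pa n) \<le> \<alpha> ^ n" for n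
  proof -
    have "real (pa n) \<le> \<alpha> ^ card (path_V n)"
      using P[rule_format, of "path_V n" "path_E n"] sg_path[of n] pw_path[of n] unfolding pa_def by blast
    then show ?thesis by (simp add: path_V_def)
  qed
  have a0: "0 < \<alpha>" using assms by simp
  have ev: "eventually (\<lambda>n. (1 / \<alpha> ^ 5) * norm (\<alpha> ^ n) \<le> norm (real (pa n)) \<and>
      norm (real (pa n)) \<le> 1 * norm (\<alpha> ^ n)) at_top"
  proof (rule eventually_at_top_linorderI[of 3])
    fix n :: nat assume n: "3 \<le> n"
    have "(1 / \<alpha> ^ 5) * norm (\<alpha> ^ n) = \<alpha> ^ n / \<alpha> ^ 5" using a0 by simp
    then show "(1 / \<alpha> ^ 5) * norm (\<alpha> ^ n) \<le> norm (real (pa n)) \<and> norm (real (pa n)) \<le> 1 * norm (\<alpha> ^ n)"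
      using pa_lower[OF assms n] up[of n] a0 by simp
  qed
  have "(\<lambda>n. real (pa n)) \<in> \<Theta>(\<lambda>n. \<alpha> ^ n)"
    by (rule bigthetaI'[OF _ _ ev]) (use a0 in simp_all)
  then show "(\<lambda>n. real (card {D. one_minimal_pds (path_V n) (path_E n) D})) \<in> \<Theta>(\<lambda>n. \<alpha> ^ n)"
    unfolding pa_def .
qed

end
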